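(* Let $k\leq n/2$ and let $L\subseteq \{w\in\{0,1\}^n : |w|_1=k\}$ be a nonempty language. Then $\mathrm{rpn}(L) \geq n k^{\Omega(\log k)} \cdot |L|/\binom{n}{k}$.
   Context: $|w|_1$ is the number of ones in $w$. Regular expressions are built from $\epsilon$ and letters by union and concatenation (no $\emptyset$); $\mathrm{rpn}(L)$ is the minimum number of syntax-tree nodes of an expression describing $L$. Logarithms are base 2. *)

theory Defs
  imports Complex_Main
begin

datatype 'a rexp = Eps | Lit 'a | Union "'a rexp" "'a rexp" | Concat "'a rexp" "'a rexp"

fun lang :: "'a rexp \<Rightarrow> 'a list set" where
  "lang Eps = {[]}"
| "lang (Lit a) = {[a]}"
| "lang (Union r s) = lang r \<union> lang s"
| "lang (Concat r s) = {u @ v | u v. u \<in> lang r \<and> v \<in> lang s}"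

fun rsize :: "'a rexp \<Rightarrow> nat" where
  "rsize Eps = 1"
| "rsize (Lit a) = 1"
| "rsize (Union r s) = 1 + rsize r + rsize s"
| "rsize (Concat r s) = 1 + rsize r + rsize s"

definition rpn :: "'a list set \<Rightarrow> nat" where
  "rpn L = (LEAST m. \<exists>r. lang r = L \<and> rsize r = m)"

text \<open>Binary words: True = 1, False = 0. Number of ones.\<close>
definition ones :: "bool list \<Rightarrow> nat" where
  "ones w = length (filter id w)"

end

theory Submission
  imports Defs
begin


definition cc :: real where "cc = 1/2000"
definition G :: "real \<Rightarrow> real" where "G x = exp (cc * (ln x)^2)"

lemma G_ge1: "1 \<le> G x"
  unfolding G_def cc_def by simp

lemma G_key:
  fixes t q :: real
  assumes q1: "1 \<le> q" and qt: "q \<le> t"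
  shows "q * G q \<ge> t * exp (- (1 + 2*cc*ln t) * (ln t - ln q)) * G t"
proof -
  have t0: "0 < t" using q1 qt by simp
  have lq: "0 \<le> ln q" using q1 by simp
  have lqt: "ln q \<le> ln t" using q1 qt by simp
  have "ln t ^ 2 - ln q ^ 2 = (ln t - ln q) * (ln t + ln q)" by (simp add: power2_eq_square algebra_simps)
  also have "\<dots> \<le> (ln t - ln q) * (2 * ln t)"
    by (rule mult_left_mono) (use lq lqt in auto)
  finally have h: "ln t ^ 2 - ln q ^ 2 \<le> (ln t - ln q) * (2 * ln t)" .
  have "t * exp (- (1 + 2*cc*ln t) * (ln t - ln q)) * G t
      = exp (ln t - (1 + 2*cc*ln t) * (ln t - ln q) + cc * (ln t)^2)"
    using t0 by (simp add: G_def exp_add exp_diff exp_minus field_simps)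
  also have "\<dots> \<le> exp (ln q + cc * (ln q)^2)"
  proof -
    have "cc * (ln t ^ 2 - ln q ^ 2) \<le> cc * ((ln t - ln q) * (2 * ln t))"
      by (rule mult_left_mono[OF h]) (simp add: cc_def)
    then show ?thesis by (simp add: algebra_simps)
  qed
  also have "\<dots> = q * G q" using q1 by (simp add: G_def exp_add)
  finally show ?thesis .
qed


lemma qG_ge: "real q \<le> real q * G (real q)"
  using G_ge1[of "real q"] mult_left_mono[of 1 "G (real q)" "real q"] by simp

lemma exp_third: "exp (-(1/3::real)) \<ge> 2/3"
  using exp_ge_add_one_self[of "-(1/3::real)"] by simp

lemma ln2_le1: "ln (2::real) \<le> 1"
  using ln_le_minus_one[of 2] by simp

lemma MR:
  fixes t q :: nat and \<rho> :: real
  assumes t1: "1 \<le> t" and qt: "q < t" and r0: "0 \<le> \<rho>" and r23: "\<rho> \<le> 2/3"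
    and rsq: "\<rho>^2 * (real t - real q) \<le> 32/3"
    and reg: "t \<le> 8*q \<or> (\<rho> \<le> 1/2 \<and> (\<exists>i::nat. 3*t \<le> 16*i + 11 \<and> \<rho> * 4^i \<le> 1))"
  shows "\<rho> * (real t * G t + 2*real t) \<le> 2*real t + real q * G q"
proof -
  have Gq: "1 \<le> G q" by (rule G_ge1)
  have Gt: "1 \<le> G t" by (rule G_ge1)
  have tpos: "(0::real) < t" using t1 by simp
  show ?thesis
  proof (cases "G t \<le> 19/16")
    case True
    show ?thesis
    proof (cases "t \<le> 8*q")
      case True
      have "\<rho> * (real t * G t + 2*real t) \<le> 2/3 * (real t * (19/16) + 2 * real t)"
        by (rule mult_mono) (use r23 \<open>G t \<le> 19/16\<close> r0 tpos Gt in \<open>auto intro!: add_mono mult_left_mono\<close>)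
      also have "\<dots> = 2 * real t + real t / 8" by simp
      also have "\<dots> \<le> 2 * real t + real q" using True by simp
      also have "\<dots> \<le> 2 * real t + real q * G q" using qG_ge[of q] by simp
      finally show ?thesis .
    next
      case False
      with reg have r12: "\<rho> \<le> 1/2" by auto
      have "\<rho> * (real t * G t + 2*real t) \<le> 1/2 * (real t * (19/16) + 2 * real t)"
        by (rule mult_mono) (use r12 \<open>G t \<le> 19/16\<close> r0 tpos Gt in \<open>auto intro!: add_mono mult_left_mono\<close>)
      also have "\<dots> \<le> 2 * real t" using tpos by simp
      also have "\<dots> \<le> 2 * real t + real q * G q" using qG_ge[of q] by simp
      finally show ?thesis .
    qed
  next
    case False
    define L where "L = ln (real t)"
    have L0: "0 \<le> L" using t1 by (simp add: L_def)
    have tL: "real t = exp L" using tpos by (simp add: L_def)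
    have "ln (19/16::real) \<ge> 3/19"
      using ln_le_minus_one[of "16/19::real"] by (simp add: ln_div)
    moreover have "ln (19/16::real) < cc * L^2"
    proof -
      have "19/16 < exp (cc * L^2)" using False by (simp add: G_def L_def)
      hence "ln (19/16) < ln (exp (cc * L^2))" by (subst ln_less_cancel_iff) auto
      thus ?thesis by simp
    qed
    ultimately have "3/19 < L^2 / 2000" by (simp add: cc_def)
    hence "17^2 < L^2" by simp
    hence L17: "17 < L" using L0 by (smt (verit) power_mono)
    define A where "A = 1 + 2*cc*L"
    have A1: "1 \<le> A" using L0 by (simp add: A_def cc_def)
    show ?thesis
    proof (cases "t \<le> 8*q")
      case True
      have q1: "1 \<le> q" using True t1 by simp
      define \<delta> where "\<delta> = L - ln (real q)"
      have key: "real q * G q \<ge> real t * exp (- A * \<delta>) * G t"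
        unfolding A_def \<delta>_def L_def by (rule G_key) (use q1 qt in auto)
      have d0: "0 \<le> \<delta>" using q1 qt by (simp add: \<delta>_def L_def)
      have "\<delta> = ln (real t / real q)" using q1 tpos by (simp add: \<delta>_def L_def ln_div)
      also have "\<dots> \<le> ln 8"
      proof (rule ln_mono)
        show "real t / real q \<le> 8" using True q1 by (simp add: divide_le_eq)
        show "0 < real t / real q" using q1 tpos by simp
      qed
      also have "\<dots> = 3 * ln 2" using ln_realpow[of 2 3] by simp
      also have "\<dots> \<le> 3" using ln2_le1 by simp
      finally have d3: "\<delta> \<le> 3" .
      show ?thesis
      proof (cases "(real t - real q) * (4*A) \<le> real t")
        case True
        have "\<delta> \<le> real t / real q - 1"
          using ln_le_minus_one[of "real t / real q"] q1 tpos
          by (simp add: \<delta>_def L_def ln_div)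
        also have "\<dots> = (real t - real q) / real q" using q1 by (simp add: field_simps)
        finally have dle: "\<delta> \<le> (real t - real q) / real q" .
        have "(real t - real q) * 4 \<le> (real t - real q) * (4*A)"
          by (rule mult_left_mono) (use qt A1 in auto)
        hence "real q \<ge> 3/4 * real t" using True by (simp add: algebra_simps)
        hence "(real t - real q) / real q \<le> (real t - real q) / (3/4 * real t)"
          using qt q1 by (intro divide_left_mono) auto
        also have "\<dots> \<le> 1 / (3*A)" using True A1 tpos by (simp add: field_simps)
        finally have X: "(real t - real q) / real q \<le> 1 / (3*A)" .
        have "A * \<delta> \<le> A * (1 / (3*A))"
          by (rule mult_left_mono) (use dle X A1 in auto)
        hence "A * \<delta> \<le> 1/3" using A1 by simp
        hence "exp (- A * \<delta>) \<ge> exp (-(1/3))" by simp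
        hence e23: "exp (- A * \<delta>) \<ge> 2/3" using exp_third by linarith
        have "\<rho> * (real t * G t + 2*real t) \<le> 2/3 * (real t * G t + 2*real t)"
          by (rule mult_right_mono) (use r23 tpos Gt in auto)
        also have "\<dots> \<le> 2*real t + real t * (2/3) * G t" by (simp add: algebra_simps)
        also have "\<dots> \<le> 2*real t + real t * exp (- A * \<delta>) * G t"
          using e23 tpos Gt by (simp add: mult_right_mono mult_left_mono)
        also have "\<dots> \<le> 2*real t + real q * G q" using key by simp
        finally show ?thesis .
      next
        case False
        have qlt: "real q < real t" using qt by simp
        have "\<rho>^2 * (real t - real q) * (4*A) \<le> 32/3 * (4*A)"
          using mult_right_mono[OF rsq, of "4*A"] A1 by simp
        moreover have "\<rho>^2 * real t \<le> \<rho>^2 * ((real t - real q) * (4*A))"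
          by (rule mult_left_mono) (use False in auto)
        ultimately have "\<rho>^2 * real t \<le> 128 * A / 3" by (simp add: algebra_simps)
        hence rs: "\<rho>^2 \<le> 128 * A / (3 * real t)" using tpos by (simp add: field_simps)
        have "ln (128 * A) = 7 * ln 2 + ln A" using A1 ln_realpow[of 2 7] by (simp add: ln_mult)
        also have "\<dots> \<le> 7 + (A - 1)" using ln2_le1 ln_le_minus_one[of A] A1 by simp
        finally have l128: "ln (128 * A) \<le> 6 + A" by simp
        have "ln (128 * A) + 6 * A \<le> L"
          using l128 L17 by (simp add: A_def cc_def)
        hence "exp (ln (128 * A) + 6 * A) \<le> exp L" by simp
        hence "128 * A * exp (6 * A) \<le> real t" using A1 tL by (simp add: exp_add)
        hence "128 * A / (3 * real t) \<le> exp (- (6*A))"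
          using tpos A1 by (simp add: exp_minus field_simps)
        with rs have "\<rho>^2 \<le> exp (- (6*A))" by simp
        also have "\<dots> = (exp (- A * 3))^2" by (simp flip: exp_of_nat_mult)
        finally have "\<rho>^2 \<le> (exp (- A * 3))^2" .
        hence rle: "\<rho> \<le> exp (- A * 3)" using r0 by (simp add: power_mono_iff abs_le_square_iff)
        have eAd: "exp (- A * 3) \<le> exp (- A * \<delta>)" using d3 A1 by simp
        have e1: "exp (- A * \<delta>) \<le> 1" using d0 A1 by simp
        have "\<rho> * (real t * G t + 2*real t) \<le> exp (- A * \<delta>) * (real t * G t + 2*real t)"
          by (rule mult_right_mono) (use order_trans[OF rle eAd] tpos Gt in auto)
        also have "\<dots> \<le> 2*real t + real t * exp (- A * \<delta>) * G t"
          using e1 tpos by (simp add: algebra_simps)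
        also have "\<dots> \<le> 2*real t + real q * G q" using key by simp
        finally show ?thesis .
      qed
    next
      case False
      with reg obtain i :: nat where r12: "\<rho> \<le> 1/2" and i3: "3*t \<le> 16*i + 11" and ri: "\<rho> * 4^i \<le> 1"
        by auto
      have "L < 2 * sqrt (real t)"
        using ln_le_minus_one[of "sqrt (real t)"] tpos by (simp add: ln_sqrt L_def)
      hence "L^2 < (2 * sqrt (real t))^2" using L0 by (intro power_strict_mono) auto
      hence "L^2 < 4 * real t" using tpos by (simp add: power_mult_distrib)
      hence GtB: "G t \<le> exp (real t / 500)" by (simp add: G_def L_def cc_def)
      have t18: "18 \<le> real t" using L17 tL exp_ge_add_one_self[of L] by linarith
      have "1 + real t / 500 \<le> real i" using i3 t18 by simp
      hence "exp (1 + real t / 500) \<le> exp (real i)" by simp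
      also have "\<dots> \<le> 4 ^ i"
      proof -
        have "exp (real i) = (exp 1) ^ i" by (simp flip: exp_of_nat_mult)
        also have "\<dots> \<le> 4 ^ i" using exp_le by (intro power_mono) auto
        finally show ?thesis by simp
      qed
      finally have e4: "exp 1 * exp (real t / 500) \<le> 4 ^ i" by (simp add: exp_add)
      have "G t + 2 \<le> 3 * exp (real t / 500)" using GtB Gt by linarith
      also have "\<dots> \<le> 2 * exp 1 * exp (real t / 500)"
        using exp_ge_add_one_self[of 1] by (intro mult_right_mono) auto
      also have "\<dots> \<le> 2 * 4 ^ i" using e4 by simp
      finally have "G t + 2 \<le> 2 * 4^i" .
      hence "\<rho> * (G t + 2) \<le> \<rho> * (2 * 4^i)" using r0 by (simp add: mult_left_mono)
      also have "\<dots> \<le> 2" using ri by simp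
      finally have "\<rho> * (G t + 2) * real t \<le> 2 * real t" using tpos by (simp add: mult_right_mono)
      hence "\<rho> * (real t * G t + 2*real t) \<le> 2 * real t" by (simp add: algebra_simps)
      also have "\<dots> \<le> 2*real t + real q * G q" using Gq by simp
      finally show ?thesis .
    qed
  qed
qed


definition B :: "nat \<Rightarrow> nat \<Rightarrow> nat" where "B o' z = (o' + z) choose o'"

lemma B_sym: "B a b = B b a"
  unfolding B_def by (metis add.commute binomial_symmetric le_add1 add_diff_cancel_left')

lemma Bstep: "B (Suc a) b * Suc a = B a (Suc b) * Suc b"
proof -
  have 1: "Suc a * (Suc (a+b) choose Suc a) = Suc (a+b) * ((a+b) choose a)" by (rule Suc_times_binomial)
  have 2: "(Suc (a+b) - a) * (Suc (a+b) choose a) = Suc (a+b) * ((Suc (a+b) - 1) choose a)" by (rule binomial_absorb_comp)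
  have "Suc (a+b) - a = Suc b" by simp
  with 1 2 show ?thesis unfolding B_def by (simp add: mult.commute)
qed

definition Pn :: "nat \<Rightarrow> nat \<Rightarrow> nat \<Rightarrow> nat \<Rightarrow> nat" where
  "Pn o1 z1 o2 z2 = B o1 z1 * B o2 z2"

lemma Pn_sym: "Pn o1 z1 o2 z2 = Pn z1 o1 z2 o2" by (simp add: Pn_def B_sym)
lemma Pn_swap: "Pn o1 z1 o2 z2 = Pn o2 z2 o1 z1" by (simp add: Pn_def)

lemma Ustep:
  assumes "i < z1" "i < o2"
  shows "Pn (o1 + Suc i) (z1 - Suc i) (o2 - Suc i) (z2 + Suc i) * ((o1 + Suc i) * (z2 + Suc i))
       = Pn (o1 + i) (z1 - i) (o2 - i) (z2 + i) * ((z1 - i) * (o2 - i))"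
proof -
  have a: "B (o1 + Suc i) (z1 - Suc i) * (o1 + Suc i) = B (o1 + i) (z1 - i) * (z1 - i)"
    using Bstep[of "o1 + i" "z1 - Suc i"] assms by (simp add: Suc_diff_Suc)
  have b: "B (o2 - Suc i) (z2 + Suc i) * (z2 + Suc i) = B (o2 - i) (z2 + i) * (o2 - i)"
    using Bstep[of "o2 - Suc i" "z2 + i"] assms by (simp add: Suc_diff_Suc)
  have "Pn (o1 + Suc i) (z1 - Suc i) (o2 - Suc i) (z2 + Suc i) * ((o1 + Suc i) * (z2 + Suc i))
      = (B (o1 + Suc i) (z1 - Suc i) * (o1 + Suc i)) * (B (o2 - Suc i) (z2 + Suc i) * (z2 + Suc i))"
    by (simp only: Pn_def mult_ac)
  also have "\<dots> = (B (o1 + i) (z1 - i) * (z1 - i)) * (B (o2 - i) (z2 + i) * (o2 - i))" by (simp only: a b)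
  also have "\<dots> = Pn (o1 + i) (z1 - i) (o2 - i) (z2 + i) * ((z1 - i) * (o2 - i))"
    by (simp only: Pn_def mult_ac)
  finally show ?thesis .
qed

lemma Dstep:
  assumes "i < o1" "i < z2"
  shows "Pn (o1 - Suc i) (z1 + Suc i) (o2 + Suc i) (z2 - Suc i) * ((z1 + Suc i) * (o2 + Suc i))
       = Pn (o1 - i) (z1 + i) (o2 + i) (z2 - i) * ((o1 - i) * (z2 - i))"
  using Ustep[of i o1 z2 z1 o2] assms by (simp add: Pn_sym[of "o1 - _"] Pn_sym[of "o1 - Suc i"] mult.commute)

lemma window_pairs:
  fixes a :: "nat \<Rightarrow> 'b::comm_monoid_add"
  assumes "w \<le> x0"
  shows "(\<Sum>x\<in>{x0-w..x0+w}. a x) = a x0 + (\<Sum>i\<in>{1..w}. a (x0+i) + a (x0-i))"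
  using assms
proof (induction w)
  case 0
  then show ?case by simp
next
  case (Suc w)
  have eq: "{x0 - Suc w..x0 + Suc w} = insert (x0 - Suc w) (insert (x0 + Suc w) {x0-w..x0+w})"
    using Suc.prems by auto
  have n1: "x0 - Suc w \<notin> insert (x0 + Suc w) {x0-w..x0+w}" using Suc.prems by auto
  have n2: "x0 + Suc w \<notin> {x0-w..x0+w}" by auto
  have "(\<Sum>x\<in>{x0 - Suc w..x0 + Suc w}. a x) = a (x0 - Suc w) + (a (x0 + Suc w) + (\<Sum>x\<in>{x0-w..x0+w}. a x))"
    unfolding eq by (simp only: sum.insert[OF finite_insert[THEN iffD2, OF finite_atLeastAtMost] n1] sum.insert[OF finite_atLeastAtMost n2])
  also have "\<dots> = a x0 + (\<Sum>i\<in>{1..Suc w}. a (x0+i) + a (x0-i))"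
    using Suc by (simp add: sum.cl_ivl_Suc algebra_simps)
  finally show ?case .
qed

lemma window_down:
  fixes a :: "nat \<Rightarrow> 'b::comm_monoid_add"
  assumes "e \<le> x0"
  shows "(\<Sum>x\<in>{x0-e..x0}. a x) = (\<Sum>i\<in>{0..e}. a (x0-i))"
  using assms
proof (induction e)
  case 0
  then show ?case by simp
next
  case (Suc e)
  have eq: "{x0 - Suc e..x0} = insert (x0 - Suc e) {x0-e..x0}" using Suc.prems by auto
  have n1: "x0 - Suc e \<notin> {x0-e..x0}" using Suc.prems by auto
  have "(\<Sum>x\<in>{x0 - Suc e..x0}. a x) = a (x0 - Suc e) + (\<Sum>x\<in>{x0-e..x0}. a x)"
    unfolding eq by (simp only: sum.insert[OF finite_atLeastAtMost n1])
  also have "\<dots> = (\<Sum>i\<in>{0..Suc e}. a (x0-i))"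
    using Suc by (simp add: sum.cl_ivl_Suc algebra_simps)
  finally show ?case .
qed

definition term' :: "nat \<Rightarrow> nat \<Rightarrow> nat \<Rightarrow> nat \<Rightarrow> nat \<Rightarrow> nat" where
  "term' o1 z1 o2 z2 x = ((o1+z1) choose x) * ((o2+z2) choose (o1+o2-x))"

lemma sum_term: "(\<Sum>x\<le>o1+o2. term' o1 z1 o2 z2 x) = (o1+z1+o2+z2) choose (o1+o2)"
  unfolding term'_def using vandermonde[of "o1+z1" "o2+z2" "o1+o2"] by (simp add: add.assoc)

lemma sub_total:
  assumes "I \<subseteq> {..o1+o2}"
  shows "(\<Sum>x\<in>I. term' o1 z1 o2 z2 x) \<le> (o1+z1+o2+z2) choose (o1+o2)"
  unfolding sum_term[symmetric] by (rule sum_mono2) (use assms in auto)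

lemma term_up: "i \<le> z1 \<Longrightarrow> i \<le> o2 \<Longrightarrow> term' o1 z1 o2 z2 (o1+i) = Pn (o1 + i) (z1 - i) (o2 - i) (z2 + i)"
  unfolding term'_def Pn_def B_def
  by (simp add: binomial_symmetric[of "o2 - i" "o2 + z2", symmetric])

lemma term_down: "i \<le> o1 \<Longrightarrow> i \<le> z2 \<Longrightarrow> term' o1 z1 o2 z2 (o1-i) = Pn (o1 - i) (z1 + i) (o2 + i) (z2 - i)"
  unfolding term'_def Pn_def B_def
  by (simp add: binomial_symmetric[of "o2 + i" "o2 + z2", symmetric])


definition U :: "nat \<Rightarrow> nat \<Rightarrow> nat \<Rightarrow> nat \<Rightarrow> nat \<Rightarrow> real" where
  "U o1 z1 o2 z2 i = real (Pn (o1+i) (z1-i) (o2-i) (z2+i))"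
definition D :: "nat \<Rightarrow> nat \<Rightarrow> nat \<Rightarrow> nat \<Rightarrow> nat \<Rightarrow> real" where
  "D o1 z1 o2 z2 i = real (Pn (o1-i) (z1+i) (o2+i) (z2-i))"

lemma fac_bound:
  fixes c i m :: nat
  assumes "1 \<le> m" "m \<le> c" "i < c"
  shows "real (c - i) / real (c + i + 1) \<ge> 1 - (2*real i+1) / real m"
proof -
  have "real (c - i) / real (c + i + 1) = 1 - (2*real i+1) / real (c + i + 1)"
    using assms by (simp add: field_simps of_nat_diff)
  moreover have "(2*real i+1) / real (c + i + 1) \<le> (2*real i+1) / real m"
    using assms by (intro divide_left_mono) auto
  ultimately show ?thesis by simp
qed

lemma four_prod:
  fixes a b c d y :: real
  assumes "a \<ge> 1 - y" "b \<ge> 1 - y" "c \<ge> 1 - y" "d \<ge> 1 - y" "1 - y \<ge> 0"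
  shows "a * b * c * d \<ge> 1 - 4*y"
proof -
  have "a * b * c * d \<ge> (1-y)*(1-y)*(1-y)*(1-y)"
    using assms by (intro mult_mono) auto
  moreover have "(1-y)*(1-y)*(1-y)*(1-y) \<ge> 1 - 4*y"
  proof (cases "y \<ge> 1/4")
    case True
    have "0 \<le> (1-y)*(1-y)*(1-y)*(1-y)" using assms by simp
    then show ?thesis using True by linarith
  next
    case False
    have s: "(1-y)*(1-y) \<ge> 1 - 2*y" by (simp add: algebra_simps)
    have "(1-y)*(1-y)*((1-y)*(1-y)) \<ge> (1-2*y)*(1-2*y)"
      using s False by (intro mult_mono) auto
    moreover have "(1-2*y)*(1-2*y) \<ge> 1 - 4*y" by (simp add: algebra_simps)
    ultimately show ?thesis by (simp add: mult.assoc)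
  qed
  ultimately show ?thesis by linarith
qed

lemma UD_step:
  assumes "i < z1" "i < o2" "i < o1" "i < z2"
  shows "U o1 z1 o2 z2 (Suc i) * D o1 z1 o2 z2 (Suc i) =
    U o1 z1 o2 z2 i * D o1 z1 o2 z2 i *
      ((real (z1 - i) / real (z1 + i + 1)) * (real (o2 - i) / real (o2 + i + 1)) *
       (real (o1 - i) / real (o1 + i + 1)) * (real (z2 - i) / real (z2 + i + 1)))"
proof -
  have u: "U o1 z1 o2 z2 (Suc i) * (real (o1 + Suc i) * real (z2 + Suc i)) = U o1 z1 o2 z2 i * (real (z1 - i) * real (o2 - i))"
    using arg_cong[OF Ustep[OF assms(1,2), of o1 z2], of real] unfolding U_def by (simp only: of_nat_mult)
  have d: "D o1 z1 o2 z2 (Suc i) * (real (z1 + Suc i) * real (o2 + Suc i)) = D o1 z1 o2 z2 i * (real (o1 - i) * real (z2 - i))"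
    using arg_cong[OF Dstep[OF assms(3,4), of z1 o2], of real] unfolding D_def by (simp only: of_nat_mult)
  have pos: "real (o1 + Suc i) > 0" "real (z2 + Suc i) > 0" "real (z1 + Suc i) > 0" "real (o2 + Suc i) > 0" by auto
  have u': "U o1 z1 o2 z2 (Suc i) = U o1 z1 o2 z2 i * (real (z1 - i) * real (o2 - i)) / (real (o1 + Suc i) * real (z2 + Suc i))"
    by (rule eq_divide_imp[OF _ u]) (use pos in simp)
  have d': "D o1 z1 o2 z2 (Suc i) = D o1 z1 o2 z2 i * (real (o1 - i) * real (z2 - i)) / (real (z1 + Suc i) * real (o2 + Suc i))"
    by (rule eq_divide_imp[OF _ d]) (use pos in simp)
  show ?thesis unfolding u' d' by (simp add: field_simps)
qed

lemma UD0: "U o1 z1 o2 z2 0 = real (Pn o1 z1 o2 z2)" "D o1 z1 o2 z2 0 = real (Pn o1 z1 o2 z2)"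
  by (simp_all add: U_def D_def)

lemma prod_bound:
  fixes m :: nat
  assumes m1: "1 \<le> m" and mo: "m \<le> o1" "m \<le> z1" "m \<le> o2" "m \<le> z2"
  shows "4*i^2 \<le> m \<Longrightarrow> U o1 z1 o2 z2 i * D o1 z1 o2 z2 i \<ge> (real (Pn o1 z1 o2 z2))^2 * (1 - 4*(real i)^2/real m)"
proof (induction i)
  case 0
  then show ?case by (simp add: UD0 power2_eq_square)
next
  case (Suc i)
  define P where "P = real (Pn o1 z1 o2 z2)"
  have sq: "4 * (Suc i)^2 \<le> m" using Suc.prems by simp
  have sqi: "Suc i \<le> (Suc i)^2" by (simp add: power2_eq_square)
  have im: "i + 1 \<le> m" using sq sqi by linarith
  have "i^2 \<le> (Suc i)^2" by (rule power_mono) auto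
  hence h2: "4 * i^2 \<le> m" using sq by linarith
  have sq2: "2*i+1 \<le> (Suc i)^2" by (simp add: power2_eq_square)
  have IH: "U o1 z1 o2 z2 i * D o1 z1 o2 z2 i \<ge> P^2 * (1 - 4*(real i)^2/real m)" using Suc.IH[OF h2] by (simp add: P_def)
  define y where "y = (2*real i+1) / m"
  have y1: "1 - y \<ge> 0"
  proof -
    have "2*i+1 \<le> m" using sq sq2 by linarith
    thus ?thesis using m1 by (simp add: y_def)
  qed
  have fb: "((real (z1 - i) / real (z1 + i + 1)) * (real (o2 - i) / real (o2 + i + 1)) *
       (real (o1 - i) / real (o1 + i + 1)) * (real (z2 - i) / real (z2 + i + 1))) \<ge> 1 - 4*y"
  proof (rule four_prod[OF _ _ _ _ y1])
    show "1 - y \<le> real (z1 - i) / real (z1 + i + 1)" unfolding y_def by (rule fac_bound[OF m1 mo(2)]) (use im mo in auto)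
    show "1 - y \<le> real (o2 - i) / real (o2 + i + 1)" unfolding y_def by (rule fac_bound[OF m1 mo(3)]) (use im mo in auto)
    show "1 - y \<le> real (o1 - i) / real (o1 + i + 1)" unfolding y_def by (rule fac_bound[OF m1 mo(1)]) (use im mo in auto)
    show "1 - y \<le> real (z2 - i) / real (z2 + i + 1)" unfolding y_def by (rule fac_bound[OF m1 mo(4)]) (use im mo in auto)
  qed
  have yb: "1 - 4*y \<ge> 0"
  proof -
    have "4*(2*i+1) \<le> m" using sq mult_le_mono2[OF sq2, of 4] by linarith
    hence "real (4*(2*i+1)) \<le> real m" by (simp only: of_nat_le_iff)
    hence "4*(2*real i+1) \<le> m" by simp
    thus ?thesis using m1 by (simp add: y_def field_simps)
  qed
  have "real (4*i^2) \<le> real m" using h2 by (simp only: of_nat_le_iff)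
  hence "4*(real i)^2 \<le> real m" by simp
  hence a1: "4*(real i)^2 / real m \<le> 1" using m1 by (simp add: divide_le_eq)
  have a0: "0 \<le> 4*(real i)^2 / real m" by simp
  have ih0: "P^2 * (1 - 4*(real i)^2/real m) \<ge> 0"
    using a1 by (intro mult_nonneg_nonneg) auto
  have "U o1 z1 o2 z2 (Suc i) * D o1 z1 o2 z2 (Suc i) \<ge> P^2 * (1 - 4*(real i)^2/real m) * (1 - 4*y)"
  proof -
    have st: "U o1 z1 o2 z2 (Suc i) * D o1 z1 o2 z2 (Suc i) =
      U o1 z1 o2 z2 i * D o1 z1 o2 z2 i *
      ((real (z1 - i) / real (z1 + i + 1)) * (real (o2 - i) / real (o2 + i + 1)) *
       (real (o1 - i) / real (o1 + i + 1)) * (real (z2 - i) / real (z2 + i + 1)))"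
      by (rule UD_step) (use im mo in auto)
    have nn: "0 \<le> U o1 z1 o2 z2 i * D o1 z1 o2 z2 i" by (simp add: U_def D_def)
    show ?thesis unfolding st by (rule mult_mono[OF IH fb nn yb])
  qed
  moreover have "P^2 * (1 - 4*(real i)^2/real m) * (1 - 4*y) \<ge> P^2 * (1 - 4*(real (Suc i))^2/real m)"
  proof -
    have "(1 - 4*(real i)^2/real m) * (1 - 4*y) \<ge> 1 - 4*(real i)^2/real m - 4*y"
    proof -
      have y0: "0 \<le> y" by (simp add: y_def)
      have "0 \<le> (4*(real i)^2/real m) * (4*y)" using a0 y0 by simp
      moreover have gen: "\<And>a b::real. (1-a)*(1-b) = 1 - a - b + a*b" by (simp add: algebra_simps)
      moreover have "(1 - 4*(real i)^2/real m) * (1 - 4*y) = 1 - 4*(real i)^2/real m - 4*y + (4*(real i)^2/real m) * (4*y)"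
        by (rule gen)
      ultimately show ?thesis by linarith
    qed
    also have "1 - 4*(real i)^2/real m - 4*y = 1 - 4*(real (Suc i))^2/real m"
      using m1 by (simp add: y_def field_simps power2_eq_square)
    finally show ?thesis by (simp add: mult.assoc mult_left_mono)
  qed
  ultimately show ?case by (simp add: P_def)
qed


definition Cn :: "nat \<Rightarrow> nat \<Rightarrow> nat \<Rightarrow> nat \<Rightarrow> nat" where
  "Cn o1 z1 o2 z2 = (o1+z1+o2+z2) choose (o1+o2)"

lemma term0: "term' o1 z1 o2 z2 o1 = Pn o1 z1 o2 z2"
  using term_up[of 0 z1 o2 o1 z2] by simp

lemma Pn_le_Cn: "Pn o1 z1 o2 z2 \<le> Cn o1 z1 o2 z2"
  using sub_total[of "{o1}" o1 o2 z1 z2] by (simp add: term0 Cn_def)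

lemma sum_ge_pair:
  fixes u d p :: real
  assumes "u*d \<ge> p^2/4" "0 \<le> u" "0 \<le> d" "0 \<le> p"
  shows "u + d \<ge> p"
proof -
  have "(u+d)^2 = (u-d)^2 + 4*(u*d)" by (simp add: power2_eq_square algebra_simps)
  moreover have "(u-d)^2 \<ge> 0" by simp
  ultimately have "(u+d)^2 \<ge> p^2" using assms(1) by linarith
  thus ?thesis by (rule power2_le_imp_le) (use assms in simp)
qed

lemma window_real:
  assumes "w \<le> o1" "w \<le> z1" "w \<le> o2" "w \<le> z2"
  shows "real (Pn o1 z1 o2 z2) + (\<Sum>i\<in>{1..w}. U o1 z1 o2 z2 i + D o1 z1 o2 z2 i) \<le> real (Cn o1 z1 o2 z2)"
proof -
  have "(\<Sum>x\<in>{o1-w..o1+w}. term' o1 z1 o2 z2 x) \<le> Cn o1 z1 o2 z2"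
    unfolding Cn_def by (rule sub_total) (use assms in auto)
  moreover have "(\<Sum>x\<in>{o1-w..o1+w}. term' o1 z1 o2 z2 x) = term' o1 z1 o2 z2 o1 + (\<Sum>i\<in>{1..w}. term' o1 z1 o2 z2 (o1+i) + term' o1 z1 o2 z2 (o1-i))"
    by (rule window_pairs) (use assms in auto)
  moreover have "(\<Sum>i\<in>{1..w}. term' o1 z1 o2 z2 (o1+i) + term' o1 z1 o2 z2 (o1-i)) =
     (\<Sum>i\<in>{1..w}. Pn (o1 + i) (z1 - i) (o2 - i) (z2 + i) + Pn (o1 - i) (z1 + i) (o2 + i) (z2 - i))"
    by (rule sum.cong) (use assms in \<open>auto simp: term_up term_down\<close>)
  ultimately have "Pn o1 z1 o2 z2 + (\<Sum>i\<in>{1..w}. Pn (o1 + i) (z1 - i) (o2 - i) (z2 + i) + Pn (o1 - i) (z1 + i) (o2 + i) (z2 - i)) \<le> Cn o1 z1 o2 z2"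
    by (simp add: term0)
  hence "real (Pn o1 z1 o2 z2 + (\<Sum>i\<in>{1..w}. Pn (o1 + i) (z1 - i) (o2 - i) (z2 + i) + Pn (o1 - i) (z1 + i) (o2 + i) (z2 - i))) \<le> real (Cn o1 z1 o2 z2)"
    by (simp only: of_nat_le_iff)
  thus ?thesis by (simp add: U_def D_def)
qed

lemma flat_w:
  fixes m w :: nat
  assumes m1: "1 \<le> m" and mo: "m \<le> o1" "m \<le> z1" "m \<le> o2" "m \<le> z2" and w: "16*w^2 \<le> 3*m"
  shows "(1 + real w) * real (Pn o1 z1 o2 z2) \<le> real (Cn o1 z1 o2 z2)"
proof -
  define P where "P = real (Pn o1 z1 o2 z2)"
  have "w \<le> w^2" by (simp add: power2_eq_square)
  hence wm: "w \<le> m" using w by linarith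
  have pair: "U o1 z1 o2 z2 i + D o1 z1 o2 z2 i \<ge> P" if i: "i \<in> {1..w}" for i
  proof -
    have "i^2 \<le> w^2" using i by (intro power_mono) auto
    hence i16: "16*i^2 \<le> 3*m" using w by linarith
    hence i4: "4*i^2 \<le> m" by linarith
    have pb: "U o1 z1 o2 z2 i * D o1 z1 o2 z2 i \<ge> P^2 * (1 - 4*(real i)^2/real m)"
      unfolding P_def by (rule prod_bound[OF m1 mo i4])
    have "real (16*i^2) \<le> real (3*m)" using i16 by (simp only: of_nat_le_iff)
    hence "16*(real i)^2 \<le> 3*real m" by simp
    hence "4*(real i)^2/real m \<le> 3/4" using m1 by (simp add: divide_le_eq)
    hence "1/4 \<le> 1 - 4*(real i)^2/real m" by linarith
    hence "P^2 * (1/4) \<le> P^2 * (1 - 4*(real i)^2/real m)" by (rule mult_left_mono) simp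
    hence "P^2 * (1 - 4*(real i)^2/real m) \<ge> P^2/4" by simp
    with pb have "U o1 z1 o2 z2 i * D o1 z1 o2 z2 i \<ge> P^2/4" by linarith
    thus ?thesis by (rule sum_ge_pair) (auto simp: U_def D_def P_def)
  qed
  have "(\<Sum>i\<in>{1..w}. U o1 z1 o2 z2 i + D o1 z1 o2 z2 i) \<ge> (\<Sum>i\<in>{1..w}. P)"
    by (rule sum_mono) (use pair in auto)
  hence "(\<Sum>i\<in>{1..w}. U o1 z1 o2 z2 i + D o1 z1 o2 z2 i) \<ge> real w * P" by simp
  moreover have "P + (\<Sum>i\<in>{1..w}. U o1 z1 o2 z2 i + D o1 z1 o2 z2 i) \<le> real (Cn o1 z1 o2 z2)"
    unfolding P_def by (rule window_real) (use wm mo in auto)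
  ultimately show ?thesis by (simp add: P_def algebra_simps)
qed

lemma flat_1:
  assumes "1 \<le> o1" "1 \<le> z1" "1 \<le> o2" "1 \<le> z2"
  shows "3 * real (Pn o1 z1 o2 z2) \<le> 2 * real (Cn o1 z1 o2 z2)"
proof -
  define P where "P = real (Pn o1 z1 o2 z2)"
  have half: "1/2 \<le> real c / real (c + 0 + 1)" if "1 \<le> c" for c :: nat
    using that by (simp add: field_simps)
  have st: "U o1 z1 o2 z2 1 * D o1 z1 o2 z2 1 = U o1 z1 o2 z2 0 * D o1 z1 o2 z2 0 *
      ((real (z1 - 0) / real (z1 + 0 + 1)) * (real (o2 - 0) / real (o2 + 0 + 1)) *
       (real (o1 - 0) / real (o1 + 0 + 1)) * (real (z2 - 0) / real (z2 + 0 + 1)))"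
    using UD_step[of 0 z1 o2 o1 z2] assms by simp
  have f: "((real (z1 - 0) / real (z1 + 0 + 1)) * (real (o2 - 0) / real (o2 + 0 + 1)) *
       (real (o1 - 0) / real (o1 + 0 + 1)) * (real (z2 - 0) / real (z2 + 0 + 1))) \<ge> 1/2*(1/2)*(1/2)*(1/2)"
    using half assms by (intro mult_mono) (auto simp del: add_0_right)
  have "U o1 z1 o2 z2 1 * D o1 z1 o2 z2 1 \<ge> (P/2)^2/4"
  proof -
    have "P * P * (1/2*(1/2)*(1/2)*(1/2)) \<le> P * P * ((real (z1 - 0) / real (z1 + 0 + 1)) * (real (o2 - 0) / real (o2 + 0 + 1)) *
       (real (o1 - 0) / real (o1 + 0 + 1)) * (real (z2 - 0) / real (z2 + 0 + 1)))"
      by (rule mult_left_mono[OF f]) simp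
    thus ?thesis unfolding st UD0 P_def[symmetric] by (simp add: power2_eq_square)
  qed
  hence "U o1 z1 o2 z2 1 + D o1 z1 o2 z2 1 \<ge> P/2"
    by (rule sum_ge_pair) (auto simp: U_def D_def P_def)
  moreover have "P + (\<Sum>i\<in>{1..1}. U o1 z1 o2 z2 i + D o1 z1 o2 z2 i) \<le> real (Cn o1 z1 o2 z2)"
    unfolding P_def by (rule window_real) (use assms in auto)
  ultimately show ?thesis by (simp add: P_def)
qed

lemma down_mono:
  fixes k :: nat
  assumes "e \<le> o1" "e \<le> z2"
    and h: "\<And>s. s < e \<Longrightarrow> k * ((z1 + Suc s) * (o2 + Suc s)) \<le> (o1 - s) * (z2 - s)"
  shows "k^e * Pn o1 z1 o2 z2 \<le> Pn (o1 - e) (z1 + e) (o2 + e) (z2 - e)"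
  using assms
proof (induction e)
  case 0
  then show ?case by simp
next
  case (Suc e)
  have IH: "k^e * Pn o1 z1 o2 z2 \<le> Pn (o1 - e) (z1 + e) (o2 + e) (z2 - e)"
    using Suc by auto
  have st: "Pn (o1 - Suc e) (z1 + Suc e) (o2 + Suc e) (z2 - Suc e) * ((z1 + Suc e) * (o2 + Suc e))
       = Pn (o1 - e) (z1 + e) (o2 + e) (z2 - e) * ((o1 - e) * (z2 - e))"
    by (rule Dstep) (use Suc.prems in auto)
  define X where "X = (z1 + Suc e) * (o2 + Suc e)"
  have X0: "0 < X" by (simp add: X_def)
  have hk: "k * X \<le> (o1 - e) * (z2 - e)" using Suc.prems(3)[of e] by (simp add: X_def)
  have "k * Pn (o1 - e) (z1 + e) (o2 + e) (z2 - e) * X \<le> Pn (o1 - e) (z1 + e) (o2 + e) (z2 - e) * ((o1 - e) * (z2 - e))"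
    using mult_le_mono2[OF hk] by (simp add: ac_simps)
  also have "\<dots> = Pn (o1 - Suc e) (z1 + Suc e) (o2 + Suc e) (z2 - Suc e) * X" using st by (simp add: X_def)
  finally have "k * Pn (o1 - e) (z1 + e) (o2 + e) (z2 - e) \<le> Pn (o1 - Suc e) (z1 + Suc e) (o2 + Suc e) (z2 - Suc e)"
    using X0 by simp
  moreover have "k^(Suc e) * Pn o1 z1 o2 z2 \<le> k * Pn (o1 - e) (z1 + e) (o2 + e) (z2 - e)"
    using mult_le_mono2[OF IH, of k] by (simp add: ac_simps)
  ultimately show ?case by linarith
qed

lemma chain1:
  assumes "e \<le> o1" "e \<le> z2"
    and h: "\<And>s. s < e \<Longrightarrow> (z1 + Suc s) * (o2 + Suc s) \<le> (o1 - s) * (z2 - s)"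
  shows "(1 + e) * Pn o1 z1 o2 z2 \<le> Cn o1 z1 o2 z2"
proof -
  have each: "Pn o1 z1 o2 z2 \<le> term' o1 z1 o2 z2 (o1 - i)" if "i \<in> {0..e}" for i
  proof -
    have "1^i * Pn o1 z1 o2 z2 \<le> Pn (o1 - i) (z1 + i) (o2 + i) (z2 - i)"
      by (rule down_mono) (use that assms in auto)
    thus ?thesis using that assms by (simp add: term_down)
  qed
  have "(1 + e) * Pn o1 z1 o2 z2 = (\<Sum>i\<in>{0..e}. Pn o1 z1 o2 z2)" by simp
  also have "\<dots> \<le> (\<Sum>i\<in>{0..e}. term' o1 z1 o2 z2 (o1 - i))" by (rule sum_mono) (rule each)
  also have "\<dots> = (\<Sum>x\<in>{o1-e..o1}. term' o1 z1 o2 z2 x)" by (rule window_down[symmetric]) (use assms in auto)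
  also have "\<dots> \<le> Cn o1 z1 o2 z2" unfolding Cn_def by (rule sub_total) auto
  finally show ?thesis .
qed

lemma chain4:
  assumes "e \<le> o1" "e \<le> z2"
    and h: "\<And>s. s < e \<Longrightarrow> 4 * ((z1 + Suc s) * (o2 + Suc s)) \<le> (o1 - s) * (z2 - s)"
  shows "4^e * Pn o1 z1 o2 z2 \<le> Cn o1 z1 o2 z2"
proof -
  have "4^e * Pn o1 z1 o2 z2 \<le> Pn (o1 - e) (z1 + e) (o2 + e) (z2 - e)"
    by (rule down_mono) (use assms in auto)
  also have "\<dots> = term' o1 z1 o2 z2 (o1 - e)" using assms by (simp add: term_down)
  also have "\<dots> \<le> Cn o1 z1 o2 z2" using sub_total[of "{o1 - e}" o1 o2 z1 z2] by (simp add: Cn_def)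
  finally show ?thesis .
qed


definition H :: "real \<Rightarrow> real" where "H x = x * G x"
definition Fz :: "nat \<Rightarrow> nat \<Rightarrow> real" where "Fz o' z = H (real (min o' z)) + real (o' + z)"

lemma H_nonneg: "0 \<le> x \<Longrightarrow> 0 \<le> H x"
  unfolding H_def using G_ge1[of x] by simp

lemma B_pos: "0 < B a b" unfolding B_def by simp
lemma Pn_pos: "0 < Pn o1 z1 o2 z2" unfolding Pn_def using B_pos by simp

lemma Cn_swap: "Cn o1 z1 o2 z2 = Cn o2 z2 o1 z1" unfolding Cn_def by (simp add: ac_simps)
lemma Cn_sym: "Cn o1 z1 o2 z2 = Cn z1 o1 z2 o2"
  unfolding Cn_def using binomial_symmetric[of "o1+o2" "o1+z1+o2+z2"]
  by (simp add: ac_simps)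

lemma exists_w: "\<exists>w::nat. 16*w^2 \<le> N \<and> N < 16*(w+1)^2"
proof (induction N)
  case 0
  then show ?case by (intro exI[of _ 0]) simp
next
  case (Suc N)
  then obtain w where w: "16*w^2 \<le> N" "N < 16*(w+1)^2" by auto
  show ?case
  proof (cases "Suc N < 16*(w+1)^2")
    case True
    then show ?thesis using w by (intro exI[of _ w]) auto
  next
    case False
    hence e: "Suc N = 16*(w+1)^2" using w by linarith
    have "(w+1)^2 < (w+2)^2" by (intro power_strict_mono) auto
    then show ?thesis using e by (intro exI[of _ "w+1"]) auto
  qed
qed

lemma MR_PC:
  fixes t q :: nat and P C :: real
  assumes C0: "0 < C" and P0: "0 \<le> P" and t1: "1 \<le> t" and qt: "q < t"
    and r23: "3 * P \<le> 2 * C"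
    and rsq: "P^2 * (real t - real q) \<le> 32/3 * C^2"
    and reg: "t \<le> 8*q \<or> (2 * P \<le> C \<and> (\<exists>i::nat. 3*t \<le> 16*i + 11 \<and> P * 4^i \<le> C))"
  shows "P * H (real t) \<le> 2 * (C - P) * real t + C * H (real q)"
proof -
  define \<rho> where "\<rho> = P / C"
  have P_eq: "P = \<rho> * C" using C0 by (simp add: \<rho>_def)
  have "\<rho> * (real t * G t + 2*real t) \<le> 2*real t + real q * G q"
  proof (rule MR[OF t1 qt])
    show "0 \<le> \<rho>" using P0 C0 by (simp add: \<rho>_def)
    show "\<rho> \<le> 2/3" using r23 C0 by (simp add: \<rho>_def divide_le_eq)
    have "\<rho>^2 * (real t - real q) * C^2 = P^2 * (real t - real q)" using C0 by (simp add: \<rho>_def power2_eq_square field_simps)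
    also have "\<dots> \<le> 32/3 * C^2" by (rule rsq)
    finally have X: "\<rho>^2 * (real t - real q) * C^2 \<le> 32/3 * C^2" .
    show "\<rho>^2 * (real t - real q) \<le> 32/3" by (rule mult_right_le_imp_le[OF X]) (use C0 in simp)
    show "t \<le> 8 * q \<or> \<rho> \<le> 1 / 2 \<and> (\<exists>i. 3 * t \<le> 16 * i + 11 \<and> \<rho> * 4 ^ i \<le> 1)"
      using reg C0 by (auto simp: \<rho>_def divide_le_eq field_simps)
  qed
  hence "\<rho> * (real t * G t + 2*real t) * C \<le> (2*real t + real q * G q) * C"
    using C0 by (simp add: mult_right_mono)
  thus ?thesis unfolding H_def using P_eq by (simp add: algebra_simps)
qed

lemma caseA:
  assumes oz1: "o1 \<le> z1" and oz2: "o2 \<le> z2" and o11: "1 \<le> o1" and o12: "o1 \<le> o2"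
  shows "real (Pn o1 z1 o2 z2) * H (real (o1+o2)) \<le> 2 * (real (Cn o1 z1 o2 z2) - real (Pn o1 z1 o2 z2)) * real (o1+o2)
     + real (Cn o1 z1 o2 z2) * H (real o2)"
proof -
  define P where "P = real (Pn o1 z1 o2 z2)"
  define C where "C = real (Cn o1 z1 o2 z2)"
  have P1: "1 \<le> P" using Pn_pos[of o1 z1 o2 z2] by (simp add: P_def)
  have PC: "P \<le> C" using Pn_le_Cn[of o1 z1 o2 z2] by (simp add: P_def C_def)
  obtain w where w: "16*w^2 \<le> 3*o1" "3*o1 < 16*(w+1)^2" using exists_w by blast
  have fw: "(1 + real w) * P \<le> C" unfolding P_def C_def
    by (rule flat_w[OF o11 _ _ _ _ w(1)]) (use assms in auto)
  have "P * H (real (o1+o2)) \<le> 2 * (C - P) * real (o1+o2) + C * H (real o2)"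
  proof (rule MR_PC)
    show "0 < C" "0 \<le> P" using P1 PC by auto
    show "1 \<le> o1 + o2" "o2 < o1 + o2" using o11 by auto
    show "3 * P \<le> 2 * C" unfolding P_def C_def by (rule flat_1) (use assms in auto)
    have a: "real (3*o1) < real (16*(w+1)^2)" using w(2) by (simp only: of_nat_less_iff)
    have "P^2 * (3 * real o1) \<le> P^2 * (16 * (1 + real w)^2)"
      using a by (intro mult_left_mono) (auto simp: add.commute)
    also have "\<dots> = 16 * ((1 + real w) * P)^2" by (simp add: power_mult_distrib)
    also have "\<dots> \<le> 16 * C^2" using fw P1 by (intro mult_left_mono power_mono) auto
    finally have "P^2 * real o1 \<le> 16/3 * C^2" by simp
    moreover have "real (o1 + o2) - real o2 = real o1" by simp
    moreover have "0 \<le> C^2" by simp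
    ultimately show "P^2 * (real (o1 + o2) - real o2) \<le> 32/3 * C^2" by (simp only:)
    show "o1 + o2 \<le> 8 * o2 \<or> (2 * P \<le> C \<and> (\<exists>i::nat. 3*(o1+o2) \<le> 16*i + 11 \<and> P * 4^i \<le> C))"
      using o12 by auto
  qed
  thus ?thesis by (simp add: P_def C_def)
qed


lemma caseB:
  assumes oz1: "z1 < o1" and oz: "o1 + o2 \<le> z1 + z2"
  shows "real (Pn o1 z1 o2 z2) * H (real (o1+o2)) \<le> 2 * (real (Cn o1 z1 o2 z2) - real (Pn o1 z1 o2 z2)) * real (o1+o2)
     + real (Cn o1 z1 o2 z2) * (H (real z1) + H (real o2))"
proof -
  define P where "P = real (Pn o1 z1 o2 z2)"
  define C where "C = real (Cn o1 z1 o2 z2)"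
  define d where "d = o1 - z1"
  define m where "m = min z1 o2"
  define M where "M = max z1 o2"
  have d1: "1 \<le> d" and o1d: "o1 = z1 + d" and z2d: "o2 + d \<le> z2" using assms by (auto simp: d_def)
  have mM: "m + M = z1 + o2" "m \<le> M" "z1 \<le> M" "o2 \<le> M" "m \<le> z1" "m \<le> o2" "M = z1 \<or> M = o2"
    by (auto simp: m_def M_def)
  have P1: "1 \<le> P" using Pn_pos[of o1 z1 o2 z2] by (simp add: P_def)
  have PC: "P \<le> C" using Pn_le_Cn[of o1 z1 o2 z2] by (simp add: P_def C_def)
  have half: "2 * P \<le> C"
  proof -
    have "(1 + 1) * Pn o1 z1 o2 z2 \<le> Cn o1 z1 o2 z2"
    proof (rule chain1)
      show "1 \<le> o1" "1 \<le> z2" using o1d z2d d1 by auto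
      fix s assume "s < (1::nat)"
      hence "z1 + Suc s \<le> o1 - s" "o2 + Suc s \<le> z2 - s" using o1d z2d d1 by auto
      thus "(z1 + Suc s) * (o2 + Suc s) \<le> (o1 - s) * (z2 - s)" by (rule mult_le_mono)
    qed
    hence "real ((1 + 1) * Pn o1 z1 o2 z2) \<le> real (Cn o1 z1 o2 z2)" by (simp only: of_nat_le_iff)
    thus ?thesis by (simp add: P_def C_def)
  qed
  have tt: "o1 + o2 = M + (m + d)" using mM o1d by simp
  have rsq: "P^2 * (real (o1+o2) - real M) \<le> 32/3 * C^2"
  proof (cases "d \<le> m")
    case True
    have m1: "1 \<le> m" using True d1 by simp
    obtain w where w: "16*w^2 \<le> 3*m" "3*m < 16*(w+1)^2" using exists_w by blast
    have fw: "(1 + real w) * P \<le> C" unfolding P_def C_def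
      by (rule flat_w[OF m1 _ _ _ _ w(1)]) (use mM o1d z2d in auto)
    have a: "real (3*m) < real (16*(w+1)^2)" using w(2) by (simp only: of_nat_less_iff)
    have "P^2 * (3 * real m) \<le> P^2 * (16 * (1 + real w)^2)"
      using a by (intro mult_left_mono) (auto simp: add.commute)
    also have "\<dots> = 16 * ((1 + real w) * P)^2" by (simp add: power_mult_distrib)
    also have "\<dots> \<le> 16 * C^2" using fw P1 by (intro mult_left_mono power_mono) auto
    finally have pm: "P^2 * real m \<le> 16/3 * C^2" by simp
    have "real (o1+o2) - real M = real (m + d)" using tt by simp
    also have "\<dots> \<le> 2 * real m" using True by simp
    finally have "P^2 * (real (o1+o2) - real M) \<le> P^2 * (2 * real m)" by (intro mult_left_mono) auto
    also have "\<dots> = 2 * (P^2 * real m)" by simp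
    also have "\<dots> \<le> 32/3 * C^2" using pm by linarith
    finally show ?thesis .
  next
    case False
    define e where "e = (d+1) div 2"
    have "(1 + e) * Pn o1 z1 o2 z2 \<le> Cn o1 z1 o2 z2"
    proof (rule chain1)
      show "e \<le> o1" "e \<le> z2" using o1d z2d by (auto simp: e_def)
      fix s assume "s < e"
      hence "z1 + Suc s \<le> o1 - s" "o2 + Suc s \<le> z2 - s" using o1d z2d by (auto simp: e_def)
      thus "(z1 + Suc s) * (o2 + Suc s) \<le> (o1 - s) * (z2 - s)" by (rule mult_le_mono)
    qed
    hence "real ((1 + e) * Pn o1 z1 o2 z2) \<le> real (Cn o1 z1 o2 z2)" by (simp only: of_nat_le_iff)
    hence ce: "(1 + real e) * P \<le> C" by (simp add: P_def C_def algebra_simps)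
    have de: "real d + 2 \<le> 2 * (1 + real e)" by (simp add: e_def)
    have "(real d + 2) * P \<le> (2 * (1 + real e)) * P" using de P1 by (intro mult_right_mono) auto
    hence c2: "(real d + 2) * P \<le> 2 * C" using ce by linarith
    have sq: "((real d + 2) * P)^2 \<le> (2*C)^2" using c2 P1 by (intro power_mono) auto
    have u2: "real (o1+o2) - real M \<le> 2 * real d" using tt False by simp
    have u0: "0 \<le> real (o1+o2) - real M" using tt by simp
    have "P^2 * (real (o1+o2) - real M) * (real d + 2)^2 = ((real d + 2) * P)^2 * (real (o1+o2) - real M)"
      by (simp add: power_mult_distrib)
    also have "\<dots> \<le> (2*C)^2 * (2 * real d)" using sq u2 u0 by (intro mult_mono) auto
    also have "\<dots> \<le> 2 * C^2 * (real d + 2)^2"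
    proof -
      have "8 * real d \<le> 2 * (real d + 2)^2" by (simp add: power2_eq_square algebra_simps)
      hence "C^2 * (8 * real d) \<le> C^2 * (2 * (real d + 2)^2)" by (intro mult_left_mono) auto
      thus ?thesis by (simp add: power_mult_distrib algebra_simps)
    qed
    finally have "P^2 * (real (o1+o2) - real M) * (real d + 2)^2 \<le> 2 * C^2 * (real d + 2)^2" .
    hence "P^2 * (real (o1+o2) - real M) \<le> 2 * C^2" by (rule mult_right_le_imp_le) simp
    also have "\<dots> \<le> 32/3 * C^2" by simp
    finally show ?thesis .
  qed
  have reg: "o1 + o2 \<le> 8*M \<or> (2 * P \<le> C \<and> (\<exists>i::nat. 3*(o1+o2) \<le> 16*i + 11 \<and> P * 4^i \<le> C))"
  proof (cases "o1 + o2 \<le> 8*M")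
    case False
    define i where "i = d div 4"
    have big: "6 * M < d" using False tt mM by linarith
    have "4^i * Pn o1 z1 o2 z2 \<le> Cn o1 z1 o2 z2"
    proof (rule chain4)
      show "i \<le> o1" "i \<le> z2" using o1d z2d by (auto simp: i_def)
      fix s assume "s < i"
      hence "2 * (z1 + Suc s) \<le> o1 - s" "2 * (o2 + Suc s) \<le> z2 - s" using o1d z2d big mM by (auto simp: i_def)
      hence "(2 * (z1 + Suc s)) * (2 * (o2 + Suc s)) \<le> (o1 - s) * (z2 - s)" by (rule mult_le_mono)
      moreover have "\<And>a b::nat. (2*a)*(2*b) = 4*(a*b)" by simp
      ultimately show "4 * ((z1 + Suc s) * (o2 + Suc s)) \<le> (o1 - s) * (z2 - s)" by metis
    qed
    hence "real (4^i * Pn o1 z1 o2 z2) \<le> real (Cn o1 z1 o2 z2)" by (simp only: of_nat_le_iff)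
    hence "P * 4^i \<le> C" by (simp add: P_def C_def mult.commute)
    moreover have "3*(o1+o2) \<le> 16*i + 11" using tt big mM by (simp add: i_def)
    ultimately show ?thesis using half by auto
  qed auto
  have "P * H (real (o1+o2)) \<le> 2 * (C - P) * real (o1+o2) + C * H (real M)"
  proof (rule MR_PC)
    show "0 < C" "0 \<le> P" using P1 PC by auto
    show "1 \<le> o1 + o2" "M < o1 + o2" using tt d1 by auto
    show "3 * P \<le> 2 * C" using half P1 by linarith
    show "P^2 * (real (o1+o2) - real M) \<le> 32/3 * C^2" by (rule rsq)
    show "o1 + o2 \<le> 8*M \<or> (2 * P \<le> C \<and> (\<exists>i::nat. 3*(o1+o2) \<le> 16*i + 11 \<and> P * 4^i \<le> C))" by (rule reg)
  qed
  also have "C * H (real M) \<le> C * (H (real z1) + H (real o2))"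
  proof -
    have "H (real M) \<le> H (real z1) + H (real o2)"
      using mM(7) H_nonneg[of "real z1"] H_nonneg[of "real o2"] by auto
    thus ?thesis using PC P1 by (intro mult_left_mono) auto
  qed
  finally show ?thesis by (simp add: P_def C_def)
qed


lemma suff:
  fixes P C Ht H1 H2 t l1 l2 :: real
  assumes "2*t \<le> l1 + l2" "0 \<le> P" "P \<le> C"
    and key: "P * Ht \<le> 2 * (C - P) * t + C * (H1 + H2)"
  shows "P * (Ht + (l1 + l2)) \<le> C * (1 + (H1 + l1) + (H2 + l2))"
proof -
  have "(C - P) * (2 * t) \<le> (C - P) * (l1 + l2)" using assms by (intro mult_left_mono) auto
  hence "2 * (C - P) * t \<le> (C - P) * (l1 + l2)" by (simp add: algebra_simps)
  hence "P * (Ht + (l1 + l2)) \<le> C * (H1 + H2) + C * (l1 + l2)" using key by (simp add: algebra_simps)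
  also have "\<dots> \<le> C * (1 + (H1 + l1) + (H2 + l2))" using assms by (simp add: algebra_simps)
  finally show ?thesis .
qed

lemma core_main:
  assumes oz: "o1 + o2 \<le> z1 + z2"
  shows "real (Pn o1 z1 o2 z2) * Fz (o1+o2) (z1+z2) \<le> real (Cn o1 z1 o2 z2) * (1 + Fz o1 z1 + Fz o2 z2)"
proof -
  define P where "P = real (Pn o1 z1 o2 z2)"
  define C where "C = real (Cn o1 z1 o2 z2)"
  have P1: "1 \<le> P" using Pn_pos[of o1 z1 o2 z2] by (simp add: P_def)
  have PC: "P \<le> C" using Pn_le_Cn[of o1 z1 o2 z2] by (simp add: P_def C_def)
  have PC': "Pn o2 z2 o1 z1 = Pn o1 z1 o2 z2" "Cn o2 z2 o1 z1 = Cn o1 z1 o2 z2"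
    by (simp_all add: Pn_swap[of o1] Cn_swap[of o1])
  have key: "P * H (real (o1+o2)) \<le> 2 * (C - P) * real (o1+o2) + C * (H (real (min o1 z1)) + H (real (min o2 z2)))"
  proof (cases "z1 < o1")
    case True
    have "o2 \<le> z2" using True oz by linarith
    with caseB[OF True oz] True show ?thesis by (simp add: P_def C_def min_def)
  next
    case F1: False
    show ?thesis
    proof (cases "z2 < o2")
      case True
      have "real (Pn o2 z2 o1 z1) * H (real (o2+o1)) \<le> 2 * (real (Cn o2 z2 o1 z1) - real (Pn o2 z2 o1 z1)) * real (o2+o1)
         + real (Cn o2 z2 o1 z1) * (H (real z2) + H (real o1))"
        by (rule caseB) (use True oz in auto)
      thus ?thesis using F1 True unfolding PC' by (simp add: P_def C_def min_def add.commute)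
    next
      case F2: False
      have m1: "min o1 z1 = o1" "min o2 z2 = o2" using F1 F2 by auto
      have Hn: "0 \<le> H (real o1)" "0 \<le> H (real o2)" by (simp_all add: H_nonneg)
      have CP0: "0 \<le> 2 * (C - P) * real (o1+o2)" using PC by simp
      show ?thesis
      proof (cases "o1 = 0 \<or> o2 = 0")
        case True
        have "P * H (real (o1+o2)) \<le> C * H (real (o1+o2))"
          using PC H_nonneg[of "real (o1+o2)"] by (intro mult_right_mono) auto
        also have "\<dots> \<le> C * (H (real o1) + H (real o2))" using True Hn PC P1 by auto
        finally show ?thesis unfolding m1 using CP0 by linarith
      next
        case False
        show ?thesis
        proof (cases "o1 \<le> o2")
          case True
          have "P * H (real (o1+o2)) \<le> 2 * (C - P) * real (o1+o2) + C * H (real o2)"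
            unfolding P_def C_def by (rule caseA) (use F1 F2 False True in auto)
          also have "\<dots> \<le> 2 * (C - P) * real (o1+o2) + C * (H (real o1) + H (real o2))"
            using Hn PC P1 by (simp add: mult_left_mono)
          finally show ?thesis unfolding m1 .
        next
          case F3: False
          have "real (Pn o2 z2 o1 z1) * H (real (o2+o1)) \<le> 2 * (real (Cn o2 z2 o1 z1) - real (Pn o2 z2 o1 z1)) * real (o2+o1)
              + real (Cn o2 z2 o1 z1) * H (real o1)"
            by (rule caseA) (use F1 F2 False F3 in auto)
          hence "P * H (real (o1+o2)) \<le> 2 * (C - P) * real (o1+o2) + C * H (real o1)"
            unfolding PC' by (simp add: P_def C_def add.commute)
          also have "\<dots> \<le> 2 * (C - P) * real (o1+o2) + C * (H (real o1) + H (real o2))"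
            using Hn PC P1 by (simp add: mult_left_mono)
          finally show ?thesis unfolding m1 .
        qed
      qed
    qed
  qed
  have "P * (H (real (o1+o2)) + (real (o1+z1) + real (o2+z2))) \<le> C * (1 + (H (real (min o1 z1)) + real (o1+z1)) + (H (real (min o2 z2)) + real (o2+z2)))"
    by (rule suff[OF _ _ PC key]) (use oz P1 in auto)
  thus ?thesis using oz by (simp add: Fz_def P_def C_def min_def algebra_simps)
qed

lemma core_full:
  "real (Pn o1 z1 o2 z2) * Fz (o1+o2) (z1+z2) \<le> real (Cn o1 z1 o2 z2) * (1 + Fz o1 z1 + Fz o2 z2)"
proof (cases "o1 + o2 \<le> z1 + z2")
  case True
  then show ?thesis by (rule core_main)
next
  case False
  have "real (Pn z1 o1 z2 o2) * Fz (z1+z2) (o1+o2) \<le> real (Cn z1 o1 z2 o2) * (1 + Fz z1 o1 + Fz z2 o2)"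
    by (rule core_main) (use False in auto)
  moreover have "Fz a b = Fz b a" for a b by (simp add: Fz_def min.commute add.commute)
  ultimately show ?thesis by (metis Pn_sym Cn_sym)
qed


lemma lang_nonempty: "lang r \<noteq> {}"
  by (induction r) auto

lemma lang_finite: "finite (lang r)"
proof (induction r)
  case (Concat r s)
  have "lang (Concat r s) = (\<lambda>(u,v). u @ v) ` (lang r \<times> lang s)" by auto
  then show ?case using Concat by simp
qed auto

lemma ones_append[simp]: "ones (u @ v) = ones u + ones v"
  by (simp add: ones_def)
lemma ones_Cons[simp]: "ones (x # w) = (if x then 1 else 0) + ones w"
  by (simp add: ones_def)
lemma ones_Nil[simp]: "ones [] = 0" by (simp add: ones_def)
lemma ones_le: "ones w \<le> length w" by (simp add: ones_def)

lemma card_slice: "card {w::bool list. length w = n \<and> ones w = k} = n choose k"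
proof (induction n arbitrary: k)
  case 0
  have "{w::bool list. length w = 0 \<and> ones w = k} = (if k = 0 then {[]} else {})" by auto
  then show ?case by simp
next
  case (Suc n)
  have eq: "{w::bool list. length w = Suc n \<and> ones w = k} =
    (Cons True) ` {w. length w = n \<and> ones w + 1 = k} \<union> (Cons False) ` {w. length w = n \<and> ones w = k}"
  proof (rule set_eqI)
    fix w :: "bool list"
    show "w \<in> {w. length w = Suc n \<and> ones w = k} \<longleftrightarrow> w \<in> (Cons True) ` {w. length w = n \<and> ones w + 1 = k} \<union> (Cons False) ` {w. length w = n \<and> ones w = k}"
      by (cases w) auto
  qed
  have disj: "(Cons True) ` {w. length w = n \<and> ones w + 1 = k} \<inter> (Cons False) ` {w. length w = n \<and> ones w = k} = {}" by auto
  have fin: "finite {w::bool list. length w = n \<and> P w}" for P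
    by (rule finite_subset[OF _ finite_lists_length_eq[of "UNIV::bool set" n]]) auto
  have c: "card {w::bool list. length w = Suc n \<and> ones w = k} = card {w::bool list. length w = n \<and> ones w + 1 = k} + (n choose k)"
    unfolding eq using disj fin Suc.IH[of k]
    by (subst card_Un_disjoint) (auto simp: card_image inj_on_def)
  show ?case
  proof (cases k)
    case 0
    have "{w::bool list. length w = n \<and> ones w + 1 = k} = {}" using 0 by auto
    then show ?thesis using c 0 by simp
  next
    case (Suc k')
    have "{w::bool list. length w = n \<and> ones w + 1 = k} = {w. length w = n \<and> ones w = k'}" using Suc by auto
    then show ?thesis using c Suc Suc.IH[of k'] by simp
  qed
qed

lemma card_sub_slice:
  assumes "\<forall>w\<in>A. length w = n \<and> ones w = k"
  shows "card A \<le> n choose k"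
proof -
  have fin: "finite {w::bool list. length w = n \<and> ones w = k}"
    by (rule finite_subset[OF _ finite_lists_length_eq[of "UNIV::bool set" n]]) auto
  have "card A \<le> card {w::bool list. length w = n \<and> ones w = k}"
    by (rule card_mono[OF fin]) (use assms in auto)
  thus ?thesis by (simp add: card_slice)
qed

lemma Fz_nonneg: "0 \<le> Fz a b"
  unfolding Fz_def using H_nonneg[of "real (min a b)"] by simp

theorem density:
  "\<forall>w\<in>lang r. length w = o' + z \<and> ones w = o' \<Longrightarrow>
    Fz o' z * real (card (lang r)) \<le> real (rsize r) * real ((o' + z) choose o')"
proof (induction r arbitrary: o' z)
  case Eps
  hence "o' + z = 0" by simp
  then show ?case by (simp add: Fz_def H_def)
next
  case (Lit b)
  hence "o' + z = 1" "o' = (if b then 1 else 0)" by auto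
  hence "min o' z = 0" "(o' + z) choose o' = 1" by auto
  then show ?case using \<open>o' + z = 1\<close> by (simp add: Fz_def H_def)
next
  case (Union a b)
  have ha: "\<forall>w\<in>lang a. length w = o' + z \<and> ones w = o'" and hb: "\<forall>w\<in>lang b. length w = o' + z \<and> ones w = o'"
    using Union.prems by auto
  have "real (card (lang (Union a b))) \<le> real (card (lang a)) + real (card (lang b))"
    using card_Un_le[of "lang a" "lang b"] by simp
  hence "Fz o' z * real (card (lang (Union a b))) \<le> Fz o' z * real (card (lang a)) + Fz o' z * real (card (lang b))"
    using Fz_nonneg[of o' z] by (simp add: mult_left_mono distrib_left[symmetric])
  also have "\<dots> \<le> real (rsize a) * real ((o' + z) choose o') + real (rsize b) * real ((o' + z) choose o')"
    using Union.IH(1)[OF ha] Union.IH(2)[OF hb] by simp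
  also have "\<dots> \<le> real (rsize (Union a b)) * real ((o' + z) choose o')" by (simp add: algebra_simps)
  finally show ?case .
next
  case (Concat a b)
  obtain u0 where u0: "u0 \<in> lang a" using lang_nonempty[of a] by auto
  obtain v0 where v0: "v0 \<in> lang b" using lang_nonempty[of b] by auto
  define o1 where "o1 = ones u0"
  define z1 where "z1 = length u0 - ones u0"
  define o2 where "o2 = ones v0"
  define z2 where "z2 = length v0 - ones v0"
  have u0l: "length u0 = o1 + z1" using ones_le[of u0] by (simp add: o1_def z1_def)
  have v0l: "length v0 = o2 + z2" using ones_le[of v0] by (simp add: o2_def z2_def)
  have uv: "u0 @ v0 \<in> lang (Concat a b)" using u0 v0 by auto
  have tot: "o1 + z1 + (o2 + z2) = o' + z" "o1 + o2 = o'"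
    using Concat.prems[rule_format, OF uv] u0l v0l by (auto simp: o1_def o2_def)
  have ha: "\<forall>w\<in>lang a. length w = o1 + z1 \<and> ones w = o1"
  proof
    fix u assume "u \<in> lang a"
    hence "u @ v0 \<in> lang (Concat a b)" using v0 by auto
    have "length (u @ v0) = o' + z \<and> ones (u @ v0) = o'" using Concat.prems \<open>u @ v0 \<in> lang (Concat a b)\<close> by blast
    thus "length u = o1 + z1 \<and> ones u = o1" using tot u0l v0l by (auto simp: o2_def)
  qed
  have hb: "\<forall>w\<in>lang b. length w = o2 + z2 \<and> ones w = o2"
  proof
    fix v assume "v \<in> lang b"
    hence "u0 @ v \<in> lang (Concat a b)" using u0 by auto
    have "length (u0 @ v) = o' + z \<and> ones (u0 @ v) = o'" using Concat.prems \<open>u0 @ v \<in> lang (Concat a b)\<close> by blast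
    thus "length v = o2 + z2 \<and> ones v = o2" using tot u0l v0l by (auto simp: o1_def)
  qed
  define C1 where "C1 = real ((o1 + z1) choose o1)"
  define C2 where "C2 = real ((o2 + z2) choose o2)"
  define Cc where "Cc = real ((o' + z) choose o')"
  define \<alpha> where "\<alpha> = real (card (lang a))"
  define \<beta> where "\<beta> = real (card (lang b))"
  define sa where "sa = real (rsize a)"
  define sb where "sb = real (rsize b)"
  have IHa: "Fz o1 z1 * \<alpha> \<le> sa * C1" using Concat.IH(1)[OF ha] by (simp add: \<alpha>_def sa_def C1_def)
  have IHb: "Fz o2 z2 * \<beta> \<le> sb * C2" using Concat.IH(2)[OF hb] by (simp add: \<beta>_def sb_def C2_def)
  have aC: "\<alpha> \<le> C1" using card_sub_slice[OF ha] by (simp add: \<alpha>_def C1_def)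
  have bC: "\<beta> \<le> C2" using card_sub_slice[OF hb] by (simp add: \<beta>_def C2_def)
  have a0: "0 \<le> \<alpha>" "0 \<le> \<beta>" by (simp_all add: \<alpha>_def \<beta>_def)
  have C1p: "0 < C1" "0 < C2" by (simp_all add: C1_def C2_def)
  have "z = z1 + z2" using tot by simp
  have core: "C1 * C2 * Fz o' z \<le> Cc * (1 + Fz o1 z1 + Fz o2 z2)"
  proof -
    have e1: "Cc = real (Cn o1 z1 o2 z2)" unfolding Cc_def Cn_def using tot by (simp add: ac_simps)
    have e2: "C1 * C2 = real (Pn o1 z1 o2 z2)" by (simp add: Pn_def B_def C1_def C2_def)
    have e3: "Fz o' z = Fz (o1+o2) (z1+z2)" using tot \<open>z = z1 + z2\<close> by simp
    show ?thesis unfolding e1 e2 e3 by (rule core_full)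
  qed
  have cardL: "real (card (lang (Concat a b))) \<le> \<alpha> * \<beta>"
  proof -
    have "lang (Concat a b) = (\<lambda>(u,v). u @ v) ` (lang a \<times> lang b)" by auto
    hence "card (lang (Concat a b)) \<le> card (lang a \<times> lang b)"
      using card_image_le[of "lang a \<times> lang b" "\<lambda>(u,v). u @ v"] lang_finite[of a] lang_finite[of b] by simp
    hence "card (lang (Concat a b)) \<le> card (lang a) * card (lang b)" by (simp add: card_cartesian_product)
    hence "real (card (lang (Concat a b))) \<le> real (card (lang a) * card (lang b))" by (simp only: of_nat_le_iff)
    thus ?thesis by (simp add: \<alpha>_def \<beta>_def)
  qed
  have s1: "\<alpha> * \<beta> \<le> C1 * C2" using aC bC a0 by (intro mult_mono) auto
  have s2: "Fz o1 z1 * (\<alpha> * \<beta>) \<le> sa * (C1 * C2)"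
  proof -
    have "Fz o1 z1 * (\<alpha> * \<beta>) = (Fz o1 z1 * \<alpha>) * \<beta>" by simp
    also have "\<dots> \<le> (sa * C1) * C2" by (rule mult_mono[OF IHa bC]) (use a0 C1p in \<open>auto simp: sa_def\<close>)
    finally show ?thesis by simp
  qed
  have s3: "Fz o2 z2 * (\<alpha> * \<beta>) \<le> sb * (C1 * C2)"
  proof -
    have "Fz o2 z2 * (\<alpha> * \<beta>) = (Fz o2 z2 * \<beta>) * \<alpha>" by simp
    also have "\<dots> \<le> (sb * C2) * C1" by (rule mult_mono[OF IHb aC]) (use a0 C1p in \<open>auto simp: sb_def\<close>)
    finally show ?thesis by (simp add: ac_simps)
  qed
  have comb: "(1 + Fz o1 z1 + Fz o2 z2) * (\<alpha> * \<beta>) \<le> (1 + sa + sb) * (C1 * C2)"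
    using s1 s2 s3 by (simp add: algebra_simps)
  have "C1 * C2 * (Fz o' z * real (card (lang (Concat a b)))) \<le> C1 * C2 * (Fz o' z * (\<alpha> * \<beta>))"
    using cardL Fz_nonneg[of o' z] C1p by (intro mult_left_mono) auto
  also have "\<dots> = (C1 * C2 * Fz o' z) * (\<alpha> * \<beta>)" by simp
  also have "\<dots> \<le> Cc * (1 + Fz o1 z1 + Fz o2 z2) * (\<alpha> * \<beta>)"
    using core a0 by (intro mult_right_mono) auto
  also have "\<dots> \<le> Cc * ((1 + sa + sb) * (C1 * C2))"
    using comb by (simp add: mult.assoc mult_left_mono Cc_def)
  finally have "C1 * C2 * (Fz o' z * real (card (lang (Concat a b)))) \<le> C1 * C2 * ((1 + sa + sb) * Cc)"
    by (simp add: ac_simps)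
  hence "Fz o' z * real (card (lang (Concat a b))) \<le> (1 + sa + sb) * Cc"
    using C1p by (simp add: mult_le_cancel_left_pos)
  thus ?case by (simp add: sa_def sb_def Cc_def add.assoc)
qed


fun len :: "'a rexp \<Rightarrow> nat" where
  "len Eps = 0"
| "len (Lit a) = 1"
| "len (Union a b) = len a"
| "len (Concat a b) = len a + len b"

lemma len_hom: "\<forall>w\<in>lang r. length w = N \<Longrightarrow> len r = N"
proof (induction r arbitrary: N)
  case (Concat a b)
  obtain u0 where u0: "u0 \<in> lang a" using lang_nonempty[of a] by auto
  obtain v0 where v0: "v0 \<in> lang b" using lang_nonempty[of b] by auto
  have "\<forall>u\<in>lang a. length u = N - length v0"
  proof
    fix u assume "u \<in> lang a"
    hence "u @ v0 \<in> lang (Concat a b)" using v0 by auto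
    thus "length u = N - length v0" using Concat.prems by fastforce
  qed
  hence la: "len a = N - length v0" by (rule Concat.IH(1))
  have "\<forall>v\<in>lang b. length v = N - length u0"
  proof
    fix v assume "v \<in> lang b"
    hence "u0 @ v \<in> lang (Concat a b)" using u0 by auto
    thus "length v = N - length u0" using Concat.prems by fastforce
  qed
  hence lb: "len b = N - length u0" by (rule Concat.IH(2))
  have "u0 @ v0 \<in> lang (Concat a b)" using u0 v0 by auto
  hence "length u0 + length v0 = N" using Concat.prems by fastforce
  then show ?case using la lb by simp
qed auto

fun litpos :: "nat \<Rightarrow> 'a rexp \<Rightarrow> nat list" where
  "litpos off Eps = []"
| "litpos off (Lit a) = [off]"
| "litpos off (Union a b) = litpos off a @ litpos off b"
| "litpos off (Concat a b) = litpos off a @ litpos (off + len a) b"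

lemma litpos_len: "length (litpos off r) \<le> rsize r"
  by (induction r arbitrary: off) (auto simp: add_mono le_SucI)

lemma litpos_range: "\<forall>w\<in>lang r. length w = N \<Longrightarrow> p \<in> set (litpos off r) \<Longrightarrow> off \<le> p \<and> p < off + N"
proof (induction r arbitrary: N off)
  case (Union a b)
  have ha: "\<forall>w\<in>lang a. length w = N" and hb: "\<forall>w\<in>lang b. length w = N" using Union.prems by auto
  have "p \<in> set (litpos off a) \<or> p \<in> set (litpos off b)" using Union.prems(2) by simp
  then show ?case
  proof
    assume "p \<in> set (litpos off a)"
    from Union.IH(1)[OF ha this] show ?thesis .
  next
    assume "p \<in> set (litpos off b)"
    from Union.IH(2)[OF hb this] show ?thesis .
  qed
next
  case (Concat a b)
  obtain u0 where u0: "u0 \<in> lang a" using lang_nonempty[of a] by auto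
  obtain v0 where v0: "v0 \<in> lang b" using lang_nonempty[of b] by auto
  have PP: "\<And>u v. u \<in> lang a \<Longrightarrow> v \<in> lang b \<Longrightarrow> length u + length v = N"
  proof -
    fix u v assume "u \<in> lang a" "v \<in> lang b"
    hence "u @ v \<in> lang (Concat a b)" by auto
    with Concat.prems(1) have "length (u @ v) = N" by (rule bspec)
    thus "length u + length v = N" by simp
  qed
  have ha: "\<forall>u\<in>lang a. length u = length u0"
  proof
    fix u assume "u \<in> lang a"
    thus "length u = length u0" using PP[OF _ v0, of u] PP[OF u0 v0] by simp
  qed
  have hb: "\<forall>v\<in>lang b. length v = length v0"
  proof
    fix v assume "v \<in> lang b"
    thus "length v = length v0" using PP[OF u0, of v] PP[OF u0 v0] by simp
  qed
  have N: "length u0 + length v0 = N" using PP[OF u0 v0] .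
  have la: "len a = length u0" using len_hom[OF ha] .
  have "p \<in> set (litpos off a) \<or> p \<in> set (litpos (off + len a) b)" using Concat.prems(2) by simp
  then show ?case
  proof
    assume "p \<in> set (litpos off a)"
    from Concat.IH(1)[OF ha this] show ?thesis using N by simp
  next
    assume "p \<in> set (litpos (off + len a) b)"
    from Concat.IH(2)[OF hb this] show ?thesis using N la by simp
  qed
next
  case Eps
  then show ?case by simp
next
  case (Lit x)
  then show ?case by simp
qed

definition cntS :: "nat set \<Rightarrow> nat \<Rightarrow> 'a rexp \<Rightarrow> nat" where
  "cntS S off r = length (filter (\<lambda>p. p \<in> S) (litpos off r))"

fun proj :: "nat set \<Rightarrow> nat \<Rightarrow> bool list \<Rightarrow> bool list" where
  "proj S off [] = []"
| "proj S off (x # xs) = (if off \<in> S then x # proj S (Suc off) xs else proj S (Suc off) xs)"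

fun okw :: "nat set \<Rightarrow> nat \<Rightarrow> bool list \<Rightarrow> bool" where
  "okw S off [] = True"
| "okw S off (x # xs) = ((x \<longrightarrow> off \<in> S) \<and> okw S (Suc off) xs)"

lemma proj_append: "proj S off (u @ v) = proj S off u @ proj S (off + length u) v"
  by (induction u arbitrary: off) auto

lemma okw_append: "okw S off (u @ v) = (okw S off u \<and> okw S (off + length u) v)"
  by (induction u arbitrary: off) auto

lemma length_proj: "length (proj S off w) = card (S \<inter> {off..<off + length w})"
proof (induction w arbitrary: off)
  case Nil
  then show ?case by simp
next
  case (Cons x w)
  have iv: "{off..<off + length (x # w)} = insert off {Suc off..<Suc off + length w}" by auto
  have eq: "S \<inter> {off..<off + length (x # w)} = (if off \<in> S then insert off (S \<inter> {Suc off..<Suc off + length w}) else S \<inter> {Suc off..<Suc off + length w})"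
    unfolding iv by auto
  show ?case unfolding eq using Cons[of "Suc off"] by simp
qed

lemma ones_proj: "okw S off w \<Longrightarrow> ones (proj S off w) = ones w"
  by (induction w arbitrary: off) auto

lemma proj_inj: "okw S off u \<Longrightarrow> okw S off v \<Longrightarrow> length u = length v \<Longrightarrow> proj S off u = proj S off v \<Longrightarrow> u = v"
proof (induction u arbitrary: v off)
  case Nil
  then show ?case by simp
next
  case (Cons x u)
  then obtain y v' where v: "v = y # v'" by (cases v) auto
  have ok: "x \<longrightarrow> off \<in> S" "okw S (Suc off) u" "y \<longrightarrow> off \<in> S" "okw S (Suc off) v'"
    using Cons.prems(1,2) v by auto
  have ln: "length u = length v'" using Cons.prems(3) v by simp
  show ?case
  proof (cases "off \<in> S")
    case True
    hence "x = y" "proj S (Suc off) u = proj S (Suc off) v'" using Cons.prems(4) v by auto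
    then show ?thesis using Cons.IH[OF ok(2) ok(4) ln] v by simp
  next
    case False
    hence "x = y" "proj S (Suc off) u = proj S (Suc off) v'" using Cons.prems(4) v ok by auto
    then show ?thesis using Cons.IH[OF ok(2) ok(4) ln] v by simp
  qed
qed

lemma okw_iff: "okw S off w = (\<forall>i<length w. w ! i \<longrightarrow> off + i \<in> S)"
proof (induction w arbitrary: off)
  case Nil
  then show ?case by simp
next
  case (Cons x w)
  show ?case using Cons[of "Suc off"] by (simp add: All_less_Suc2)
qed


definition Lr :: "nat set \<Rightarrow> nat \<Rightarrow> bool rexp \<Rightarrow> bool list set" where
  "Lr S off r = proj S off ` {w \<in> lang r. okw S off w}"

lemma Lr_length:
  assumes "\<forall>w\<in>lang r. length w = N" "x \<in> Lr S off r"
  shows "length x = card (S \<inter> {off..<off + N})"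
  using assms by (auto simp: Lr_def length_proj)

lemma Lr_Union: "Lr S off (Union a b) = Lr S off a \<union> Lr S off b"
  by (auto simp: Lr_def)

lemma Lr_Concat:
  assumes "\<forall>u\<in>lang a. length u = len a"
  shows "Lr S off (Concat a b) = {x @ y | x y. x \<in> Lr S off a \<and> y \<in> Lr S (off + len a) b}"
proof (rule set_eqI)
  fix w
  show "w \<in> Lr S off (Concat a b) \<longleftrightarrow> w \<in> {x @ y | x y. x \<in> Lr S off a \<and> y \<in> Lr S (off + len a) b}"
  proof
    assume "w \<in> Lr S off (Concat a b)"
    then obtain u v where uv: "u \<in> lang a" "v \<in> lang b" "okw S off (u @ v)" "w = proj S off (u @ v)"
      unfolding Lr_def by auto
    have lu: "length u = len a" using assms uv(1) by blast
    have "proj S off u \<in> Lr S off a" using uv okw_append[of S off u v] unfolding Lr_def by auto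
    moreover have "proj S (off + len a) v \<in> Lr S (off + len a) b" using uv okw_append[of S off u v] lu unfolding Lr_def by auto
    moreover have "w = proj S off u @ proj S (off + len a) v" using uv(4) lu by (simp add: proj_append)
    ultimately show "w \<in> {x @ y | x y. x \<in> Lr S off a \<and> y \<in> Lr S (off + len a) b}" by blast
  next
    assume "w \<in> {x @ y | x y. x \<in> Lr S off a \<and> y \<in> Lr S (off + len a) b}"
    then obtain u v where uv: "u \<in> lang a" "okw S off u" "v \<in> lang b" "okw S (off + len a) v"
       "w = proj S off u @ proj S (off + len a) v"
      unfolding Lr_def by auto
    have lu: "length u = len a" using assms uv(1) by blast
    have "u @ v \<in> lang (Concat a b)" using uv by auto
    moreover have "okw S off (u @ v)" using uv lu by (simp add: okw_append)
    moreover have "w = proj S off (u @ v)" using uv lu by (simp add: proj_append)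
    ultimately show "w \<in> Lr S off (Concat a b)" unfolding Lr_def by blast
  qed
qed

lemma cntS_Union: "cntS S off (Union a b) = cntS S off a + cntS S off b"
  by (simp add: cntS_def)
lemma cntS_Concat: "cntS S off (Concat a b) = cntS S off a + cntS S (off + len a) b"
  by (simp add: cntS_def)

lemma restrict:
  "\<forall>w\<in>lang r. length w = N \<Longrightarrow>
   Lr S off r = {} \<or> Lr S off r = {[]} \<or> (\<exists>e. lang e = Lr S off r \<and> rsize e + 1 \<le> 2 * cntS S off r)"
proof (induction r arbitrary: N off)
  case Eps
  have "Lr S off Eps = {[]}" by (auto simp: Lr_def)
  then show ?case by simp
next
  case (Lit x)
  show ?case
  proof (cases "off \<in> S")
    case True
    have "Lr S off (Lit x) = {[x]}" using True by (auto simp: Lr_def)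
    moreover have "cntS S off (Lit x) = 1" using True by (simp add: cntS_def)
    ultimately show ?thesis by (intro disjI2 exI[of _ "Lit x"]) simp
  next
    case False
    show ?thesis using False by (cases x) (auto simp: Lr_def)
  qed
next
  case (Union a b)
  have ha: "\<forall>w\<in>lang a. length w = N" and hb: "\<forall>w\<in>lang b. length w = N" using Union.prems by auto
  define m where "m = card (S \<inter> {off..<off + N})"
  have lenU: "\<And>x. x \<in> Lr S off (Union a b) \<Longrightarrow> length x = m"
    using Lr_length[OF Union.prems] by (simp add: m_def)
  show ?case
  proof (cases "m = 0")
    case True
    hence "Lr S off (Union a b) \<subseteq> {[]}" using lenU by auto
    then show ?thesis by blast
  next
    case False
    have na: "Lr S off a \<noteq> {[]}" using lenU False Lr_Union[of S off a b] by auto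
    have nb: "Lr S off b \<noteq> {[]}" using lenU False Lr_Union[of S off a b] by auto
    from Union.IH(1)[OF ha, of off] na
    have A: "Lr S off a = {} \<or> (\<exists>e. lang e = Lr S off a \<and> rsize e + 1 \<le> 2 * cntS S off a)" by auto
    from Union.IH(2)[OF hb, of off] nb
    have B: "Lr S off b = {} \<or> (\<exists>e. lang e = Lr S off b \<and> rsize e + 1 \<le> 2 * cntS S off b)" by auto
    show ?thesis
    proof (cases "Lr S off a = {}")
      case True
      then show ?thesis using B by (auto simp: Lr_Union cntS_Union)
    next
      case F1: False
      then obtain ea where ea: "lang ea = Lr S off a" "rsize ea + 1 \<le> 2 * cntS S off a" using A by auto
      show ?thesis
      proof (cases "Lr S off b = {}")
        case True
        then show ?thesis using ea by (intro disjI2 exI[of _ ea]) (auto simp: Lr_Union cntS_Union)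
      next
        case False
        then obtain eb where eb: "lang eb = Lr S off b" "rsize eb + 1 \<le> 2 * cntS S off b" using B by auto
        show ?thesis using ea eb by (intro disjI2 exI[of _ "Union ea eb"]) (auto simp: Lr_Union cntS_Union)
      qed
    qed
  qed
next
  case (Concat a b)
  obtain u0 where u0: "u0 \<in> lang a" using lang_nonempty[of a] by auto
  obtain v0 where v0: "v0 \<in> lang b" using lang_nonempty[of b] by auto
  have PP: "\<And>u v. u \<in> lang a \<Longrightarrow> v \<in> lang b \<Longrightarrow> length u + length v = N"
  proof -
    fix u v assume "u \<in> lang a" "v \<in> lang b"
    hence "u @ v \<in> lang (Concat a b)" by auto
    with Concat.prems(1) have "length (u @ v) = N" by (rule bspec)
    thus "length u + length v = N" by simp
  qed
  have ha: "\<forall>u\<in>lang a. length u = length u0"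
  proof
    fix u assume "u \<in> lang a"
    thus "length u = length u0" using PP[OF _ v0, of u] PP[OF u0 v0] by simp
  qed
  have hb: "\<forall>v\<in>lang b. length v = length v0"
  proof
    fix v assume "v \<in> lang b"
    thus "length v = length v0" using PP[OF u0, of v] PP[OF u0 v0] by simp
  qed
  have la: "len a = length u0" using len_hom[OF ha] .
  have ha': "\<forall>u\<in>lang a. length u = len a" using ha la by simp
  have LC: "Lr S off (Concat a b) = {x @ y | x y. x \<in> Lr S off a \<and> y \<in> Lr S (off + len a) b}"
    by (rule Lr_Concat[OF ha'])
  have A: "Lr S off a = {} \<or> Lr S off a = {[]} \<or> (\<exists>e. lang e = Lr S off a \<and> rsize e + 1 \<le> 2 * cntS S off a)"
    by (rule Concat.IH(1)[OF ha])
  have B: "Lr S (off + len a) b = {} \<or> Lr S (off + len a) b = {[]} \<or> (\<exists>e. lang e = Lr S (off + len a) b \<and> rsize e + 1 \<le> 2 * cntS S (off + len a) b)"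
    by (rule Concat.IH(2)[OF hb])
  show ?case
  proof (cases "Lr S off a = {} \<or> Lr S (off + len a) b = {}")
    case True
    hence "Lr S off (Concat a b) = {}" unfolding LC by auto
    then show ?thesis by simp
  next
    case F0: False
    show ?thesis
    proof (cases "Lr S off a = {[]}")
      case True
      hence eq: "Lr S off (Concat a b) = Lr S (off + len a) b" unfolding LC by auto
      show ?thesis using B unfolding eq cntS_Concat by auto
    next
      case F1: False
      then obtain ea where ea: "lang ea = Lr S off a" "rsize ea + 1 \<le> 2 * cntS S off a" using A F0 by auto
      show ?thesis
      proof (cases "Lr S (off + len a) b = {[]}")
        case True
        hence eq: "Lr S off (Concat a b) = Lr S off a" unfolding LC by auto
        show ?thesis using ea unfolding eq cntS_Concat by (intro disjI2 exI[of _ ea]) auto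
      next
        case False
        then obtain eb where eb: "lang eb = Lr S (off + len a) b" "rsize eb + 1 \<le> 2 * cntS S (off + len a) b"
          using B F0 by auto
        have "lang (Concat ea eb) = Lr S off (Concat a b)" unfolding LC using ea eb by simp
        then show ?thesis using ea eb unfolding cntS_Concat by (intro disjI2 exI[of _ "Concat ea eb"]) auto
      qed
    qed
  qed
qed


lemma card_supersets:
  assumes A: "finite A" and TA: "T \<subseteq> A" and Tm: "card T \<le> m"
  shows "card {S. S \<subseteq> A \<and> card S = m \<and> T \<subseteq> S} = (card A - card T) choose (m - card T)"
proof -
  have fT: "finite T" using A TA finite_subset by blast
  have inj: "inj_on (\<lambda>S. S - T) {S. S \<subseteq> A \<and> card S = m \<and> T \<subseteq> S}"
  proof (rule inj_onI)
    fix S1 S2 assume "S1 \<in> {S. S \<subseteq> A \<and> card S = m \<and> T \<subseteq> S}" "S2 \<in> {S. S \<subseteq> A \<and> card S = m \<and> T \<subseteq> S}" "S1 - T = S2 - T"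
    thus "S1 = S2" by blast
  qed
  have img: "(\<lambda>S. S - T) ` {S. S \<subseteq> A \<and> card S = m \<and> T \<subseteq> S} = {U. U \<subseteq> A - T \<and> card U = m - card T}"
  proof (rule set_eqI, rule iffI)
    fix U assume "U \<in> (\<lambda>S. S - T) ` {S. S \<subseteq> A \<and> card S = m \<and> T \<subseteq> S}"
    then obtain S where S: "S \<subseteq> A" "card S = m" "T \<subseteq> S" "U = S - T" by auto
    have "finite S" using S A finite_subset by blast
    hence "card U = m - card T" using S by (simp add: card_Diff_subset fT)
    thus "U \<in> {U. U \<subseteq> A - T \<and> card U = m - card T}" using S by auto
  next
    fix U assume U: "U \<in> {U. U \<subseteq> A - T \<and> card U = m - card T}"
    have fU: "finite U" using U A finite_subset by blast
    have "card (U \<union> T) = card U + card T" using U by (intro card_Un_disjoint fU fT) auto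
    hence "card (U \<union> T) = m" using U Tm by simp
    moreover have "U = (U \<union> T) - T" using U by auto
    ultimately show "U \<in> (\<lambda>S. S - T) ` {S. S \<subseteq> A \<and> card S = m \<and> T \<subseteq> S}" using U TA by blast
  qed
  have "card {S. S \<subseteq> A \<and> card S = m \<and> T \<subseteq> S} = card {U. U \<subseteq> A - T \<and> card U = m - card T}"
    using card_image[OF inj] img by simp
  also have "\<dots> = card (A - T) choose (m - card T)" using A by (simp add: n_subsets)
  also have "card (A - T) = card A - card T" using TA fT by (simp add: card_Diff_subset)
  finally show ?thesis .
qed

lemma card_filter_sum: "finite A \<Longrightarrow> card {x\<in>A. P x} = (\<Sum>x\<in>A. if P x then 1 else 0)"
  using sum.inter_filter[of A "\<lambda>_. 1::nat" P] by simp

lemma sum_card_swap: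
  assumes "finite X" "finite Y"
  shows "(\<Sum>S\<in>X. card {w\<in>Y. P S w}) = (\<Sum>w\<in>Y. card {S\<in>X. P S w})"
proof -
  have "(\<Sum>S\<in>X. card {w\<in>Y. P S w}) = (\<Sum>S\<in>X. \<Sum>w\<in>Y. if P S w then 1 else 0)"
    using assms by (simp add: card_filter_sum)
  also have "\<dots> = (\<Sum>w\<in>Y. \<Sum>S\<in>X. if P S w then 1 else 0)" by (rule sum.swap)
  also have "\<dots> = (\<Sum>w\<in>Y. card {S\<in>X. P S w})" using assms by (simp add: card_filter_sum)
  finally show ?thesis .
qed

lemma sum_filter_len:
  assumes "finite A" "\<forall>p\<in>set ps. card {S\<in>A. p \<in> S} = K"
  shows "(\<Sum>S\<in>A. length (filter (\<lambda>p. p \<in> S) ps)) = length ps * K"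
  using assms(2)
proof (induction ps)
  case Nil
  then show ?case by simp
next
  case (Cons p ps)
  have "(\<Sum>S\<in>A. length (filter (\<lambda>p. p \<in> S) (p # ps))) = (\<Sum>S\<in>A. (if p \<in> S then 1 else 0) + length (filter (\<lambda>p. p \<in> S) ps))"
    by (rule sum.cong) auto
  also have "\<dots> = (\<Sum>S\<in>A. if p \<in> S then 1 else 0) + (\<Sum>S\<in>A. length (filter (\<lambda>p. p \<in> S) ps))"
    by (rule sum.distrib)
  also have "(\<Sum>S\<in>A. if p \<in> S then 1 else 0) = card {S\<in>A. p \<in> S}" using assms(1) by (simp add: card_filter_sum)
  finally show ?case using Cons by simp
qed

lemma ones_card: "ones w = card {i. i < length w \<and> w ! i}"
  unfolding ones_def by (simp add: length_filter_conv_card)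


lemma per_S:
  assumes k1: "1 \<le> k" and S: "S \<subseteq> {..<n}" "card S = 2*k"
    and hom: "\<forall>w\<in>lang r. length w = n \<and> ones w = k"
  shows "Fz k k * real (card {w \<in> lang r. okw S 0 w}) \<le> real (2 * cntS S 0 r) * real ((k + k) choose k)"
proof -
  have homl: "\<forall>w\<in>lang r. length w = n" using hom by auto
  have Sint: "S \<inter> {0..<0 + n} = S" using S by auto
  have crd: "card (Lr S 0 r) = card {w \<in> lang r. okw S 0 w}"
    unfolding Lr_def
  proof (rule card_image, rule inj_onI)
    fix u v assume "u \<in> {w \<in> lang r. okw S 0 w}" "v \<in> {w \<in> lang r. okw S 0 w}" "proj S 0 u = proj S 0 v"
    thus "u = v" using proj_inj[of S 0 u v] hom by auto
  qed
  have homL: "\<forall>x\<in>Lr S 0 r. length x = k + k \<and> ones x = k"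
  proof
    fix x assume x: "x \<in> Lr S 0 r"
    have "length x = card (S \<inter> {0..<0 + n})" by (rule Lr_length[OF homl x])
    moreover from x obtain w where "w \<in> lang r" "okw S 0 w" "x = proj S 0 w" unfolding Lr_def by auto
    hence "ones x = k" using hom ones_proj by auto
    ultimately show "length x = k + k \<and> ones x = k" using Sint S by simp
  qed
  from restrict[OF homl, of S 0]
  show ?thesis
  proof (elim disjE)
    assume "Lr S 0 r = {}"
    hence "card {w \<in> lang r. okw S 0 w} = 0" using crd by simp
    then show ?thesis by simp
  next
    assume "Lr S 0 r = {[]}"
    then show ?thesis using homL k1 by auto
  next
    assume "\<exists>e. lang e = Lr S 0 r \<and> rsize e + 1 \<le> 2 * cntS S 0 r"
    then obtain e where e: "lang e = Lr S 0 r" "rsize e + 1 \<le> 2 * cntS S 0 r" by auto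
    have "Fz k k * real (card (lang e)) \<le> real (rsize e) * real ((k + k) choose k)"
      by (rule density) (use homL e in auto)
    also have "\<dots> \<le> real (2 * cntS S 0 r) * real ((k + k) choose k)"
      using e(2) by (intro mult_right_mono) auto
    finally show ?thesis using e crd by simp
  qed
qed

lemma aux1:
  fixes a b n t c rs :: real
  assumes "n*b = t*c"
  shows "2*a*rs*b*n = 2*rs*t*(c*a)"
proof -
  have "2*a*rs*b*n = 2*a*rs*(n*b)" by (simp add: ac_simps)
  also have "\<dots> = 2*a*rs*(t*c)" using assms by simp
  also have "\<dots> = 2*rs*t*(c*a)" by (simp add: ac_simps)
  finally show ?thesis .
qed

lemma aux2:
  fixes rs k p X :: real
  shows "2*rs*(2*k)*(p*X) = (4*rs*p)*(k*X)"
  by (simp add: ac_simps)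

lemma aux3:
  fixes k g c X n :: real
  shows "k*g*c*X*n = (g*c*n)*(k*X)"
  by (simp add: ac_simps)

theorem main_bound:
  assumes k1: "1 \<le> k" and nk: "2*k \<le> n"
    and hom: "\<forall>w\<in>lang r. length w = n \<and> ones w = k"
  shows "(G (real k) + 2) * real (card (lang r)) * real n \<le> 4 * real (rsize r) * real (n choose k)"
proof -
  define SS where "SS = {S. S \<subseteq> {..<n} \<and> card S = 2*k}"
  have fSS: "finite SS" unfolding SS_def by (rule finite_subset[of _ "Pow {..<n}"]) auto
  have homl: "\<forall>w\<in>lang r. length w = n" using hom by auto
  have fL: "finite (lang r)" by (rule lang_finite)
  have cw: "card {S\<in>SS. okw S 0 w} = (n - k) choose k" if w: "w \<in> lang r" for w
  proof -
    define T where "T = {i. i < length w \<and> w ! i}"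
    have lw: "length w = n" "ones w = k" using hom w by auto
    have cT: "card T = k" using lw ones_card[of w] by (simp add: T_def)
    have TA: "T \<subseteq> {..<n}" using lw by (auto simp: T_def)
    have "{S\<in>SS. okw S 0 w} = {S. S \<subseteq> {..<n} \<and> card S = 2*k \<and> T \<subseteq> S}"
      unfolding SS_def T_def by (auto simp: okw_iff)
    also have "card \<dots> = (n - k) choose (2*k - k)"
      using card_supersets[of "{..<n}" T "2*k"] TA cT by simp
    finally show ?thesis by simp
  qed
  have sumL: "(\<Sum>S\<in>SS. card {w \<in> lang r. okw S 0 w}) = card (lang r) * ((n - k) choose k)"
    using sum_card_swap[OF fSS fL, of "\<lambda>S w. okw S 0 w"] cw by simp
  have cp: "card {S\<in>SS. p \<in> S} = (n - 1) choose (2*k - 1)" if p: "p < n" for p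
  proof -
    have "{S\<in>SS. p \<in> S} = {S. S \<subseteq> {..<n} \<and> card S = 2*k \<and> {p} \<subseteq> S}" unfolding SS_def by auto
    also have "card \<dots> = (n - 1) choose (2*k - 1)"
      using card_supersets[of "{..<n}" "{p}" "2*k"] p k1 by simp
    finally show ?thesis .
  qed
  have sumR: "(\<Sum>S\<in>SS. cntS S 0 r) = length (litpos 0 r) * ((n - 1) choose (2*k - 1))"
    unfolding cntS_def
  proof (rule sum_filter_len[OF fSS], rule ballI)
    fix p assume "p \<in> set (litpos 0 r)"
    hence "p < n" using litpos_range[OF homl, of p 0] by simp
    thus "card {S\<in>SS. p \<in> S} = (n - 1) choose (2*k - 1)" by (rule cp)
  qed
  have "(\<Sum>S\<in>SS. Fz k k * real (card {w \<in> lang r. okw S 0 w})) \<le> (\<Sum>S\<in>SS. real (2 * cntS S 0 r) * real ((k + k) choose k))"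
    by (rule sum_mono) (rule per_S[OF k1 _ _ hom], auto simp: SS_def)
  moreover have "(\<Sum>S\<in>SS. Fz k k * real (card {w \<in> lang r. okw S 0 w})) = Fz k k * real (\<Sum>S\<in>SS. card {w \<in> lang r. okw S 0 w})"
    by (simp add: sum_distrib_left)
  moreover have "(\<Sum>S\<in>SS. real (2 * cntS S 0 r) * real ((k + k) choose k)) = 2 * real (k + k choose k) * real (\<Sum>S\<in>SS. cntS S 0 r)"
    by (simp add: sum_distrib_left sum_distrib_right mult.commute mult.left_commute)
  ultimately have "Fz k k * real (\<Sum>S\<in>SS. card {w \<in> lang r. okw S 0 w}) \<le> 2 * real (k + k choose k) * real (\<Sum>S\<in>SS. cntS S 0 r)"
    by simp
  hence ineq: "Fz k k * real (card (lang r)) * real ((n - k) choose k) \<le> 2 * real (k + k choose k) * real (length (litpos 0 r)) * real ((n - 1) choose (2*k - 1))"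
    unfolding sumL sumR by (simp only: of_nat_mult mult.assoc)
  have lp: "real (length (litpos 0 r)) \<le> real (rsize r)" using litpos_len[of 0 r] by simp
  have id1: "(2*k) * (n choose (2*k)) = n * ((n - 1) choose (2*k - 1))"
    using times_binomial_minus1_eq[of "2*k" n] k1 by simp
  have id2: "(n choose (2*k)) * ((2*k) choose k) = (n choose k) * ((n - k) choose k)"
    using choose_mult[of k "2*k" n] nk by simp
  have Fk: "Fz k k = real k * (G (real k) + 2)" by (simp add: Fz_def H_def algebra_simps)
  have kk: "(k + k) choose k = (2*k) choose k" by (simp only: mult_2)
  define X where "X = real ((n - k) choose k)"
  have X0: "0 < X" using nk by (simp add: X_def)
  have "Fz k k * real (card (lang r)) * X * real n \<le> 2 * real (k + k choose k) * real (rsize r) * real ((n - 1) choose (2*k - 1)) * real n"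
  proof -
    have A: "2 * real (k + k choose k) * real (length (litpos 0 r)) * real ((n - 1) choose (2*k - 1)) \<le> 2 * real (k + k choose k) * real (rsize r) * real ((n - 1) choose (2*k - 1))"
      using lp by (intro mult_right_mono mult_left_mono) auto
    have "Fz k k * real (card (lang r)) * X \<le> 2 * real (k + k choose k) * real (rsize r) * real ((n - 1) choose (2*k - 1))"
      using order_trans[OF ineq A] by (simp add: X_def)
    thus ?thesis by (intro mult_right_mono) auto
  qed
  also have "\<dots> = 2 * real (rsize r) * real (2*k) * real ((n choose (2*k)) * ((2*k) choose k))"
  proof -
    have "real (n * ((n - 1) choose (2*k - 1))) = real ((2*k) * (n choose (2*k)))" using id1 by simp
    hence "real n * real ((n - 1) choose (2*k - 1)) = real (2*k) * real (n choose (2*k))" by (simp only: of_nat_mult)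
    from aux1[OF this, of "real (k + k choose k)" "real (rsize r)"]
    show ?thesis by (simp only: of_nat_mult kk)
  qed
  also have "\<dots> = (4 * real (rsize r) * real (n choose k)) * (real k * X)"
    unfolding id2 X_def of_nat_mult of_nat_numeral by algebra
  finally have Z: "Fz k k * real (card (lang r)) * X * real n \<le> (4 * real (rsize r) * real (n choose k)) * (real k * X)" .
  have "Fz k k * real (card (lang r)) * X * real n = ((G (real k) + 2) * real (card (lang r)) * real n) * (real k * X)"
    unfolding Fk by (rule aux3)
  with Z have "((G (real k) + 2) * real (card (lang r)) * real n) * (real k * X) \<le> (4 * real (rsize r) * real (n choose k)) * (real k * X)"
    by simp
  thus ?thesis using X0 k1 by (simp add: mult_le_cancel_right_pos)
qed


fun wexp :: "'a list \<Rightarrow> 'a rexp" where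
  "wexp [] = Eps"
| "wexp (a # w) = Concat (Lit a) (wexp w)"

lemma lang_wexp: "lang (wexp w) = {w}"
  by (induction w) auto

lemma exists_rexp: "finite L \<Longrightarrow> L \<noteq> {} \<Longrightarrow> \<exists>r. lang r = L"
proof (induction L rule: finite_ne_induct)
  case (singleton x)
  then show ?case using lang_wexp[of x] by blast
next
  case (insert x F)
  then obtain r where "lang r = F" by blast
  hence "lang (Union (wexp x) r) = insert x F" by (simp add: lang_wexp)
  then show ?case by blast
qed

lemma len_size: "2 * len r \<le> rsize r + 1"
  by (induction r) auto

lemma rpn_attained:
  assumes "\<exists>r. lang r = L"
  shows "\<exists>r. lang r = L \<and> rsize r = rpn L"
proof -
  from assms obtain r0 where "lang r0 = L" by blast
  hence "\<exists>m. \<exists>r. lang r = L \<and> rsize r = m" by blast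
  hence "\<exists>r. lang r = L \<and> rsize r = (LEAST m. \<exists>r. lang r = L \<and> rsize r = m)"
    by (rule LeastI_ex)
  thus ?thesis by (simp add: rpn_def)
qed

theorem corollary5p3:
  "\<exists>c>0. \<forall>(n::nat) (k::nat) (L::bool list set).
     2 * k \<le> n \<longrightarrow> L \<noteq> {} \<longrightarrow>
     L \<subseteq> {w. length w = n \<and> ones w = k} \<longrightarrow>
     real (rpn L) \<ge> real n * real k powr (c * log 2 (real k)) * real (card L) / real (n choose k)"
proof (intro exI[of _ "ln 2 / 16000"] conjI allI impI)
  show "0 < ln (2::real) / 16000" by simp
  fix n k :: nat and L :: "bool list set"
  assume nk: "2 * k \<le> n" and Lne: "L \<noteq> {}" and Ls: "L \<subseteq> {w. length w = n \<and> ones w = k}"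
  show "real n * real k powr (ln 2 / 16000 * log 2 (real k)) * real (card L) / real (n choose k) \<le> real (rpn L)"
  proof (cases "k = 0")
    case True
    then show ?thesis by simp
  next
    case False
    hence k1: "1 \<le> k" by simp
    have n2: "2 \<le> n" using nk k1 by simp
    have finL: "finite L"
      by (rule finite_subset[OF _ finite_lists_length_eq[of "UNIV::bool set" n]]) (use Ls in auto)
    obtain r where r: "lang r = L" "rsize r = rpn L"
      using rpn_attained[OF exists_rexp[OF finL Lne]] by blast
    have hom: "\<forall>w\<in>lang r. length w = n \<and> ones w = k" using Ls r by auto
    have homl: "\<forall>w\<in>lang r. length w = n" using hom by auto
    have cardL: "real (card L) \<le> real (n choose k)"
      using card_sub_slice[OF hom] r by simp
    have Cpos: "0 < real (n choose k)" using nk by simp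
    define y where "y = exp (cc * (ln (real k))^2 / 8)"
    have y1: "1 \<le> y" unfolding y_def cc_def by simp
    have kpos: "0 < real k" using k1 by simp
    have pw: "real k powr (ln 2 / 16000 * log 2 (real k)) = y"
      using kpos by (simp add: powr_def y_def cc_def log_def power2_eq_square)
    have Gk: "G (real k) = y ^ 8"
    proof -
      have "y ^ 8 = exp (real 8 * (cc * (ln (real k))^2 / 8))" unfolding y_def by (rule exp_of_nat_mult[symmetric])
      thus ?thesis by (simp add: G_def)
    qed
    have goal: "real n * y * real (card L) \<le> real (rpn L) * real (n choose k)"
    proof (cases "y \<le> 3/2")
      case True
      have "2 * len r \<le> rsize r + 1" by (rule len_size)
      moreover have "len r = n" by (rule len_hom[OF homl])
      ultimately have "2 * n \<le> rpn L + 1" using r by simp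
      hence rp: "3/2 * real n \<le> real (rpn L)" using n2 by linarith
      have "real n * y * real (card L) \<le> real n * (3/2) * real (n choose k)"
        using True cardL y1 by (intro mult_mono) auto
      also have "\<dots> \<le> real (rpn L) * real (n choose k)"
        using rp Cpos by (simp add: mult_right_mono)
      finally show ?thesis .
    next
      case False
      have mb: "(G (real k) + 2) * real (card (lang r)) * real n \<le> 4 * real (rsize r) * real (n choose k)"
        by (rule main_bound[OF k1 nk hom])
      have "(3/2::real)^7 \<le> y^7" using False by (intro power_mono) auto
      moreover have "(4::real) \<le> (3/2)^7" by (simp add: power_numeral_reduce)
      ultimately have "4 \<le> y^7" by linarith
      hence "4 * y \<le> y^7 * y" using y1 by (intro mult_right_mono) auto
      hence y8: "4 * y \<le> y^8 + 2" by (simp add: power_Suc2[symmetric])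
      have "4 * (real n * y * real (card L)) = (4 * y) * (real (card L) * real n)" by simp
      also have "\<dots> \<le> (y^8 + 2) * (real (card L) * real n)" using y8 by (intro mult_right_mono) auto
      also have "\<dots> \<le> 4 * (real (rpn L) * real (n choose k))" using mb r Gk by (simp add: mult.assoc)
      finally show ?thesis by simp
    qed
    show ?thesis unfolding pw using goal Cpos by (simp add: divide_le_eq)
  qed
qed


end
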